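(* Let $G$ be a word hyperbolic group and $0\to\mathbb Z\xrightarrow{\iota}E\xrightarrow{\pi}G\to1$ a central extension, $X$ a finite set mapping onto a symmetric generating set of $E$ (evaluation $w\mapsto\overline w\in E$). Let $C>0$ be an integer such that for every $g\in G$ the maximum $\rho(g):=\max\{\overline w\,\iota(-C\,\mathrm{len}(w)): w\in X^*,\ \pi(\overline w)=g\}$ exists in the ordered fibre $\pi^{-1}(g)$, and such that for some $\lambda>0$ every word achieving this maximum is a $(\lambda,0)$-quasigeodesic in the Cayley graph of $G$ with respect to $\pi(\overline X)$. Let $0\to\mathbb Q\xrightarrow{\iota_{\mathbb Q}}E_{\mathbb Q}\to G\to1$ be the pushout of the extension along $\mathbb Z\subset\mathbb Q$, and define $q:G\to E_{\mathbb Q}$ by $q(g)=\tfrac12\big(\rho(g)+\rho(g^{-1})^{-1}\big)$. Then the cocycle determined by $q$ is bounded: there is a constant $M$ such that the rational number $\tau(g,h)$ defined by $\iota_{\mathbb Q}(\tau(g,h))=q(gh)^{-1}q(g)q(h)$ satisfies $|\tau(g,h)|\le M$ for all $g,h\in G$.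
   Context: Order on a fibre: $h_1\le h_2$ iff $h_2h_1^{-1}=\iota(n)$ with $n\ge0$. $E_{\mathbb Q}=(E\times\mathbb Q)/\{(\iota(n),-n):n\in\mathbb Z\}$, a central extension of $G$ by $\mathbb Q$ containing $E$. For $h_1,h_2$ in the same fibre of $E_{\mathbb Q}\to G$, their average $\tfrac12(h_1+h_2)$ is $h_2\,\iota_{\mathbb Q}(r/2)$ where $\iota_{\mathbb Q}(r)=h_1h_2^{-1}$; note $\rho(g)$ and $\rho(g^{-1})^{-1}$ lie in the same fibre. *)

theory Defs
  imports Complex_Main "HOL-Algebra.Algebra"
begin

definition rat_group :: "rat monoid" where
  "rat_group = \<lparr>carrier = UNIV, monoid.mult = (+), one = (0::rat)\<rparr>"

definition eval_word :: "('e,'m) monoid_scheme \<Rightarrow> ('x \<Rightarrow> 'e) \<Rightarrow> 'x list \<Rightarrow> 'e" where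
  "eval_word E ev w = foldr (\<lambda>x a. ev x \<otimes>\<^bsub>E\<^esub> a) w \<one>\<^bsub>E\<^esub>"

definition word_length :: "('a,'m) monoid_scheme \<Rightarrow> 'a set \<Rightarrow> 'a \<Rightarrow> nat" where
  "word_length G S g =
     (LEAST n. \<exists>ws. set ws \<subseteq> S \<union> m_inv G ` S \<and> length ws = n \<and>
                    foldr (\<lambda>a b. a \<otimes>\<^bsub>G\<^esub> b) ws \<one>\<^bsub>G\<^esub> = g)"

definition word_dist :: "('a,'m) monoid_scheme \<Rightarrow> 'a set \<Rightarrow> 'a \<Rightarrow> 'a \<Rightarrow> nat" where
  "word_dist G S a b = word_length G S (inv\<^bsub>G\<^esub> a \<otimes>\<^bsub>G\<^esub> b)"

definition gromov_product :: "('a,'m) monoid_scheme \<Rightarrow> 'a set \<Rightarrow> 'a \<Rightarrow> 'a \<Rightarrow> 'a \<Rightarrow> real" where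
  "gromov_product G S w x y =
     (real (word_dist G S w x) + real (word_dist G S w y) - real (word_dist G S x y)) / 2"

definition hyperbolic_group :: "('a,'m) monoid_scheme \<Rightarrow> bool" where
  "hyperbolic_group G \<longleftrightarrow> group G \<and>
     (\<exists>S (\<delta>::real). finite S \<and> S \<subseteq> carrier G \<and> generate G S = carrier G \<and>
        (\<forall>w\<in>carrier G. \<forall>x\<in>carrier G. \<forall>y\<in>carrier G. \<forall>z\<in>carrier G.
           gromov_product G S w x z \<ge>
             min (gromov_product G S w x y) (gromov_product G S w y z) - \<delta>))"

definition quasigeodesic_word ::
  "('a,'m) monoid_scheme \<Rightarrow> 'a set \<Rightarrow> ('x \<Rightarrow> 'a) \<Rightarrow> real \<Rightarrow> real \<Rightarrow> 'x list \<Rightarrow> bool" where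
  "quasigeodesic_word G S p lam eps w \<longleftrightarrow>
     (\<forall>i j. i \<le> j \<and> j \<le> length w \<longrightarrow>
        real (j - i) \<le> lam * real (word_dist G S (eval_word G p (take i w)) (eval_word G p (take j w))) + eps)"

definition central_extension ::
  "('e,'m) monoid_scheme \<Rightarrow> ('g,'n) monoid_scheme \<Rightarrow> (int \<Rightarrow> 'e) \<Rightarrow> ('e \<Rightarrow> 'g) \<Rightarrow> bool" where
  "central_extension E G \<iota> \<pi> \<longleftrightarrow> group E \<and> group G \<and>
     \<iota> \<in> hom integer_group E \<and> inj \<iota> \<and>
     \<pi> \<in> hom E G \<and> \<pi> ` carrier E = carrier G \<and>
     range \<iota> = kernel E G \<pi> \<and>
     (\<forall>n. \<forall>e\<in>carrier E. \<iota> n \<otimes>\<^bsub>E\<^esub> e = e \<otimes>\<^bsub>E\<^esub> \<iota> n)"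

definition fibre_le :: "('e,'m) monoid_scheme \<Rightarrow> (int \<Rightarrow> 'e) \<Rightarrow> 'e \<Rightarrow> 'e \<Rightarrow> bool" where
  "fibre_le E \<iota> h1 h2 \<longleftrightarrow> (\<exists>n\<ge>0. h2 \<otimes>\<^bsub>E\<^esub> inv\<^bsub>E\<^esub> h1 = \<iota> n)"

definition is_fibre_max :: "('e,'m) monoid_scheme \<Rightarrow> (int \<Rightarrow> 'e) \<Rightarrow> 'e \<Rightarrow> 'e set \<Rightarrow> bool" where
  "is_fibre_max E \<iota> m A \<longleftrightarrow> m \<in> A \<and> (\<forall>a\<in>A. fibre_le E \<iota> a m)"

definition cost_set ::
  "('e,'m) monoid_scheme \<Rightarrow> (int \<Rightarrow> 'e) \<Rightarrow> ('e \<Rightarrow> 'g) \<Rightarrow> 'x set \<Rightarrow> ('x \<Rightarrow> 'e) \<Rightarrow> int \<Rightarrow> 'g \<Rightarrow> 'e set" where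
  "cost_set E \<iota> \<pi> Xa ev c g =
     (\<lambda>w. eval_word E ev w \<otimes>\<^bsub>E\<^esub> \<iota> (- c * int (length w))) `
       {w. w \<in> lists Xa \<and> \<pi> (eval_word E ev w) = g}"

definition pushout_kernel :: "('e,'m) monoid_scheme \<Rightarrow> (int \<Rightarrow> 'e) \<Rightarrow> ('e \<times> rat) set" where
  "pushout_kernel E \<iota> = (\<lambda>n. (\<iota> n, - of_int n)) ` UNIV"

definition EQ :: "('e,'m) monoid_scheme \<Rightarrow> (int \<Rightarrow> 'e) \<Rightarrow> ('e \<times> rat) set monoid" where
  "EQ E \<iota> = (E \<times>\<times> rat_group) Mod (pushout_kernel E \<iota>)"

definition iotaQ :: "('e,'m) monoid_scheme \<Rightarrow> (int \<Rightarrow> 'e) \<Rightarrow> rat \<Rightarrow> ('e \<times> rat) set" where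
  "iotaQ E \<iota> r = pushout_kernel E \<iota> #>\<^bsub>E \<times>\<times> rat_group\<^esub> (\<one>\<^bsub>E\<^esub>, r)"

definition embQ :: "('e,'m) monoid_scheme \<Rightarrow> (int \<Rightarrow> 'e) \<Rightarrow> 'e \<Rightarrow> ('e \<times> rat) set" where
  "embQ E \<iota> e = pushout_kernel E \<iota> #>\<^bsub>E \<times>\<times> rat_group\<^esub> (e, 0)"

definition fibre_avg ::
  "('e,'m) monoid_scheme \<Rightarrow> (int \<Rightarrow> 'e) \<Rightarrow> ('e \<times> rat) set \<Rightarrow> ('e \<times> rat) set \<Rightarrow> ('e \<times> rat) set" where
  "fibre_avg E \<iota> h1 h2 =
     h2 \<otimes>\<^bsub>EQ E \<iota>\<^esub> iotaQ E \<iota> ((THE r. iotaQ E \<iota> r = h1 \<otimes>\<^bsub>EQ E \<iota>\<^esub> inv\<^bsub>EQ E \<iota>\<^esub> h2) / 2)"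

definition qmap ::
  "('g,'n) monoid_scheme \<Rightarrow> ('e,'m) monoid_scheme \<Rightarrow> (int \<Rightarrow> 'e) \<Rightarrow> ('g \<Rightarrow> 'e) \<Rightarrow> 'g \<Rightarrow> ('e \<times> rat) set" where
  "qmap G E \<iota> \<rho> g =
     fibre_avg E \<iota> (embQ E \<iota> (\<rho> g)) (inv\<^bsub>EQ E \<iota>\<^esub> (embQ E \<iota> (\<rho> (inv\<^bsub>G\<^esub> g))))"

end

theory Submission
  imports Defs
begin

definition wprod :: "('a,'m) monoid_scheme \<Rightarrow> 'a list \<Rightarrow> 'a" where
  "wprod G ws = foldr (\<lambda>a b. a \<otimes>\<^bsub>G\<^esub> b) ws \<one>\<^bsub>G\<^esub>"

locale wgen = group +
  fixes A :: "'a set"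
  assumes A_carr: "A \<subseteq> carrier G" and A_gen: "generate G A = carrier G"
begin

definition Lt where "Lt = A \<union> m_inv G ` A"

lemma Lt_carr: "Lt \<subseteq> carrier G" using A_carr by (auto simp: Lt_def)

lemma Lt_inv: "a \<in> Lt \<Longrightarrow> inv a \<in> Lt"
  using A_carr by (auto simp: Lt_def)

lemma wprod_Nil [simp]: "wprod G [] = \<one>" by (simp add: wprod_def)
lemma wprod_Cons [simp]: "wprod G (a # ws) = a \<otimes> wprod G ws" by (simp add: wprod_def)

lemma wprod_carr: "set ws \<subseteq> carrier G \<Longrightarrow> wprod G ws \<in> carrier G"
  by (induction ws) auto

lemma wprod_append: "set ws \<subseteq> carrier G \<Longrightarrow> set vs \<subseteq> carrier G \<Longrightarrow>
  wprod G (ws @ vs) = wprod G ws \<otimes> wprod G vs"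
  by (induction ws) (auto simp: m_assoc wprod_carr)

lemma wprod_rev_inv: "set ws \<subseteq> carrier G \<Longrightarrow> wprod G (rev (map (m_inv G) ws)) = inv (wprod G ws)"
proof (induction ws)
  case Nil then show ?case by simp
next
  case (Cons a ws)
  have "set (rev (map (m_inv G) ws)) \<subseteq> carrier G" using Cons by auto
  then show ?case using Cons by (simp add: wprod_append wprod_carr inv_mult_group)
qed

lemma words_exist: "g \<in> carrier G \<Longrightarrow> \<exists>ws. set ws \<subseteq> Lt \<and> wprod G ws = g"
proof -
  assume "g \<in> carrier G"
  then have "g \<in> generate G A" using A_gen by simp
  then show ?thesis
  proof (induction rule: generate.induct)
    case one then show ?case by (auto intro: exI[of _ "[]"])
  next
    case (incl h) then show ?case using A_carr by (auto simp: Lt_def intro!: exI[of _ "[h]"])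
  next
    case (inv h) then show ?case using A_carr by (auto simp: Lt_def intro!: exI[of _ "[inv h]"])
  next
    case (eng h1 h2)
    then obtain w1 w2 where "set w1 \<subseteq> Lt" "wprod G w1 = h1" "set w2 \<subseteq> Lt" "wprod G w2 = h2" by blast
    then show ?case using Lt_carr by (auto intro!: exI[of _ "w1 @ w2"] simp: wprod_append)
  qed
qed

abbreviation wl where "wl \<equiv> word_length G A"

lemma wl_def': "wl g = (LEAST n. \<exists>ws. set ws \<subseteq> Lt \<and> length ws = n \<and> wprod G ws = g)"
  unfolding word_length_def Lt_def wprod_def ..

lemma wl_word: "g \<in> carrier G \<Longrightarrow> \<exists>ws. set ws \<subseteq> Lt \<and> length ws = wl g \<and> wprod G ws = g"
proof -
  assume "g \<in> carrier G"
  then obtain ws where "set ws \<subseteq> Lt" "wprod G ws = g" using words_exist by blast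
  then have "\<exists>n ws. set ws \<subseteq> Lt \<and> length ws = n \<and> wprod G ws = g" by blast
  from LeastI_ex[OF this] show ?thesis unfolding wl_def' .
qed

lemma wl_le: "set ws \<subseteq> Lt \<Longrightarrow> wl (wprod G ws) \<le> length ws"
  unfolding wl_def' by (rule Least_le) blast

lemma wl_mult: "x \<in> carrier G \<Longrightarrow> y \<in> carrier G \<Longrightarrow> wl (x \<otimes> y) \<le> wl x + wl y"
proof -
  assume x: "x \<in> carrier G" and y: "y \<in> carrier G"
  obtain u where u: "set u \<subseteq> Lt" "length u = wl x" "wprod G u = x" using wl_word[OF x] by blast
  obtain v where v: "set v \<subseteq> Lt" "length v = wl y" "wprod G v = y" using wl_word[OF y] by blast
  have "wl (wprod G (u @ v)) \<le> length (u @ v)" using u v by (intro wl_le) auto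
  then show ?thesis using u v Lt_carr by (simp add: wprod_append subset_trans)
qed

lemma wl_inv: "x \<in> carrier G \<Longrightarrow> wl (inv x) = wl x"
proof -
  have *: "wl (inv x) \<le> wl x" if x: "x \<in> carrier G" for x
  proof -
    obtain u where u: "set u \<subseteq> Lt" "length u = wl x" "wprod G u = x" using wl_word[OF x] by blast
    have "set (rev (map (m_inv G) u)) \<subseteq> Lt" using u Lt_inv by auto
    from wl_le[OF this] show ?thesis using u Lt_carr by (simp add: wprod_rev_inv subset_trans)
  qed
  assume x: "x \<in> carrier G"
  from *[OF x] *[of "inv x"] x show ?thesis by simp
qed

lemma wl_one [simp]: "wl \<one> = 0"
  using wl_le[of "[]"] by simp

lemma wl_zero: "x \<in> carrier G \<Longrightarrow> wl x = 0 \<Longrightarrow> x = \<one>"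
  using wl_word by fastforce

lemma wl_letter: "a \<in> Lt \<Longrightarrow> wl a \<le> 1"
  using wl_le[of "[a]"] Lt_carr by auto

definition dist where "dist x y = word_dist G A x y"

lemma dist_eq: "dist x y = wl (inv x \<otimes> y)" unfolding dist_def word_dist_def ..

lemma dist_self [simp]: "x \<in> carrier G \<Longrightarrow> dist x x = 0" by (simp add: dist_eq)

lemma dist_sym: "x \<in> carrier G \<Longrightarrow> y \<in> carrier G \<Longrightarrow> dist x y = dist y x"
proof -
  assume c: "x \<in> carrier G" "y \<in> carrier G"
  have "inv (inv x \<otimes> y) = inv y \<otimes> x" using c by (simp add: inv_mult_group)
  then show ?thesis unfolding dist_eq using wl_inv[of "inv x \<otimes> y"] c by simp
qed

lemma dist_tri: "x \<in> carrier G \<Longrightarrow> y \<in> carrier G \<Longrightarrow> z \<in> carrier G \<Longrightarrow> dist x z \<le> dist x y + dist y z"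
proof -
  assume c: "x \<in> carrier G" "y \<in> carrier G" "z \<in> carrier G"
  have "inv x \<otimes> z = (inv x \<otimes> y) \<otimes> (inv y \<otimes> z)" using c
    by (simp add: m_assoc[symmetric]) (simp add: m_assoc)
  then show ?thesis unfolding dist_eq using wl_mult c by simp
qed

lemma dist_transl: "z \<in> carrier G \<Longrightarrow> x \<in> carrier G \<Longrightarrow> y \<in> carrier G \<Longrightarrow> dist (z \<otimes> x) (z \<otimes> y) = dist x y"
  unfolding dist_eq by (simp add: inv_mult_group m_assoc[symmetric]) (simp add: m_assoc)

lemma dist_zero: "x \<in> carrier G \<Longrightarrow> y \<in> carrier G \<Longrightarrow> dist x y = 0 \<Longrightarrow> x = y"
proof -
  assume c: "x \<in> carrier G" "y \<in> carrier G" "dist x y = 0"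
  then have "inv x \<otimes> y = \<one>" using wl_zero by (simp add: dist_eq)
  moreover have "y = x \<otimes> (inv x \<otimes> y)" using c by (simp add: m_assoc[symmetric])
  ultimately show ?thesis using c by simp
qed

lemma dist_one: "x \<in> carrier G \<Longrightarrow> dist \<one> x = wl x" by (simp add: dist_eq)

definition geod where "geod \<gamma> x y \<longleftrightarrow> \<gamma> 0 = x \<and> \<gamma> (dist x y) = y \<and> (\<forall>i \<le> dist x y. \<gamma> i \<in> carrier G)
   \<and> (\<forall>i j. i \<le> j \<longrightarrow> j \<le> dist x y \<longrightarrow> dist (\<gamma> i) (\<gamma> j) = j - i)"

lemma cancel_help: "x \<in> carrier G \<Longrightarrow> a \<in> carrier G \<Longrightarrow> b \<in> carrier G \<Longrightarrow>
   inv (x \<otimes> a) \<otimes> (x \<otimes> (a \<otimes> b)) = b"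
proof -
  assume c: "x \<in> carrier G" "a \<in> carrier G" "b \<in> carrier G"
  have "x \<otimes> (a \<otimes> b) = (x \<otimes> a) \<otimes> b" using c by (simp add: m_assoc)
  then have "inv (x \<otimes> a) \<otimes> (x \<otimes> (a \<otimes> b)) = inv (x \<otimes> a) \<otimes> ((x \<otimes> a) \<otimes> b)" by simp
  also have "\<dots> = (inv (x \<otimes> a) \<otimes> (x \<otimes> a)) \<otimes> b" using c by (intro m_assoc[symmetric]) auto
  also have "\<dots> = b" using c by simp
  finally show ?thesis .
qed

lemma geod_exists: "x \<in> carrier G \<Longrightarrow> y \<in> carrier G \<Longrightarrow> \<exists>\<gamma>. geod \<gamma> x y"
proof -
  assume x: "x \<in> carrier G" and y: "y \<in> carrier G"
  obtain ws where ws: "set ws \<subseteq> Lt" "length ws = dist x y" "wprod G ws = inv x \<otimes> y"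
    using wl_word[of "inv x \<otimes> y"] x y by (auto simp: dist_eq)
  have wsc: "set ws \<subseteq> carrier G" using ws Lt_carr by auto
  define \<gamma> where "\<gamma> i = x \<otimes> wprod G (take i ws)" for i
  have tc: "set (take i ws) \<subseteq> carrier G" for i using wsc set_take_subset by fast
  have dc: "set (drop i ws) \<subseteq> carrier G" for i using wsc set_drop_subset by fast
  have tdc: "set (take k (drop i ws)) \<subseteq> carrier G" for i k using dc set_take_subset by fast
  have gc: "\<gamma> i \<in> carrier G" for i using x tc by (simp add: \<gamma>_def wprod_carr)
  have g0: "\<gamma> 0 = x" using x by (simp add: \<gamma>_def)
  have gn: "\<gamma> (dist x y) = y" using x y ws by (simp add: \<gamma>_def m_assoc[symmetric])
  have le: "dist (\<gamma> i) (\<gamma> j) \<le> j - i" if "i \<le> j" "j \<le> dist x y" for i j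
  proof -
    have "take j ws = take i ws @ take (j - i) (drop i ws)" using that
      by (metis le_add_diff_inverse take_add)
    then have "wprod G (take j ws) = wprod G (take i ws) \<otimes> wprod G (take (j-i) (drop i ws))"
      using wprod_append[OF tc tdc] by simp
    then have "inv (\<gamma> i) \<otimes> \<gamma> j = wprod G (take (j-i) (drop i ws))"
      unfolding \<gamma>_def using cancel_help x wprod_carr[OF tc] wprod_carr[OF tdc] by simp
    moreover have "set (take (j-i) (drop i ws)) \<subseteq> Lt" using ws(1)
      by (meson set_drop_subset set_take_subset subset_trans)
    moreover have "length (take (j-i) (drop i ws)) \<le> j - i" by simp
    ultimately show ?thesis unfolding dist_eq using wl_le le_trans by metis
  qed
  have "dist (\<gamma> i) (\<gamma> j) = j - i" if "i \<le> j" "j \<le> dist x y" for i j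
  proof -
    have "dist x y \<le> dist (\<gamma> 0) (\<gamma> i) + dist (\<gamma> i) (\<gamma> (dist x y))"
      using dist_tri gc g0 gn by metis
    moreover have "dist (\<gamma> i) (\<gamma> (dist x y)) \<le> dist (\<gamma> i) (\<gamma> j) + dist (\<gamma> j) (\<gamma> (dist x y))"
      using dist_tri gc by metis
    moreover have "dist (\<gamma> 0) (\<gamma> i) \<le> i" using le[of 0 i] that by simp
    moreover have "dist (\<gamma> j) (\<gamma> (dist x y)) \<le> dist x y - j" using le[of j "dist x y"] that by simp
    ultimately show ?thesis using le[OF that] that by linarith
  qed
  then show ?thesis unfolding geod_def using g0 gn gc by blast
qed

lemma geod_rev: "geod \<gamma> x y \<Longrightarrow> x \<in> carrier G \<Longrightarrow> y \<in> carrier G \<Longrightarrow> geod (\<lambda>i. \<gamma> (dist x y - i)) y x"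
proof -
  assume g: "geod \<gamma> x y" and c: "x \<in> carrier G" "y \<in> carrier G"
  have s: "dist y x = dist x y" using dist_sym c by simp
  show ?thesis unfolding geod_def s
  proof (intro conjI allI impI)
    show "\<gamma> (dist x y - 0) = y" using g by (simp add: geod_def)
    show "\<gamma> (dist x y - dist x y) = x" using g by (simp add: geod_def)
    fix i assume "i \<le> dist x y" then show "\<gamma> (dist x y - i) \<in> carrier G" using g by (simp add: geod_def)
  next
    fix i j assume ij: "i \<le> j" "j \<le> dist x y"
    have "dist (\<gamma> (dist x y - j)) (\<gamma> (dist x y - i)) = (dist x y - i) - (dist x y - j)"
      using g ij unfolding geod_def by auto
    moreover have "\<gamma> (dist x y - j) \<in> carrier G" "\<gamma> (dist x y - i) \<in> carrier G" using g ij by (auto simp: geod_def)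
    ultimately show "dist (\<gamma> (dist x y - i)) (\<gamma> (dist x y - j)) = j - i"
      using dist_sym ij by simp
  qed
qed

end


lemma wl_compare:
  assumes A: "wgen G A" and B: "wgen G B" and fB: "finite B"
  shows "\<exists>KB::nat. \<forall>g\<in>carrier G. word_length G A g \<le> KB * word_length G B g"
proof -
  interpret A: wgen G A by (rule A)
  interpret B: wgen G B by (rule B)
  define KB where "KB = Max (insert 0 (word_length G A ` B.Lt))"
  have fin: "finite B.Lt" using fB by (simp add: B.Lt_def)
  have let_le: "word_length G A a \<le> KB" if "a \<in> B.Lt" for a
    unfolding KB_def using fin that by (intro Max_ge) auto
  have w: "set ws \<subseteq> B.Lt \<Longrightarrow> word_length G A (wprod G ws) \<le> KB * length ws" for ws
  proof (induction ws)
    case Nil then show ?case by simp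
  next
    case (Cons a ws)
    have c: "a \<in> carrier G" "wprod G ws \<in> carrier G" using Cons.prems B.Lt_carr B.wprod_carr by auto
    have "word_length G A (wprod G (a # ws)) \<le> word_length G A a + word_length G A (wprod G ws)"
      using A.wl_mult c by simp
    also have "\<dots> \<le> KB + KB * length ws" using Cons let_le by (intro add_mono) auto
    finally show ?case by simp
  qed
  show ?thesis
  proof (intro exI ballI)
    fix g assume "g \<in> carrier G"
    then obtain ws where "set ws \<subseteq> B.Lt" "length ws = word_length G B g" "wprod G ws = g"
      using B.wl_word by blast
    then show "word_length G A g \<le> KB * word_length G B g" using w by metis
  qed
qed

lemma two_pow_sq: "real k * real k \<le> 4 * 2 ^ k"
proof (induction k)
  case 0 then show ?case by simp
next
  case (Suc k)
  have "k < 2 ^ k" using less_exp[of k] by simp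
  then have "Suc k \<le> 2 ^ k" by (simp only: Suc_le_eq)
  then have "real k + 1 \<le> 2 ^ k" by (metis of_nat_Suc of_nat_le_iff of_nat_numeral of_nat_power add.commute)
  then show ?case using Suc by (simp add: algebra_simps)
qed

lemma pow_bound:
  fixes a b :: real
  assumes "a \<ge> 0" "b \<ge> 0" "k \<ge> 1" "2 ^ (k - 1) < a + b * real k"
  shows "real k < 8 * (a + b) + 8"
proof (rule ccontr)
  assume "\<not> ?thesis"
  then have k: "real k \<ge> 8 * (a + b) + 8" by simp
  have "2 ^ k = 2 * (2::real) ^ (k - 1)" using assms(3) by (metis One_nat_def Suc_pred less_eq_Suc_le power_Suc)
  then have "real k * real k \<le> 8 * 2 ^ (k - 1)" using two_pow_sq[of k] by simp
  moreover have "real k * real k \<ge> real k * (8 * (a + b) + 8)" using k by (intro mult_left_mono) auto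
  moreover have "real k * a \<ge> a" using mult_right_mono[of 1 "real k" a] assms by auto
  moreover have "real k \<ge> 1" using assms by auto
  ultimately have "8 * 2 ^ (k-1) \<ge> 8 * (a + b * real k) + 8" by (simp add: algebra_simps)
  then show False using assms(4) by simp
qed

definition Dm :: "real \<Rightarrow> real \<Rightarrow> real \<Rightarrow> real" where
  "Dm K L \<delta> = K + \<delta> * (8 * ((6 * L * K + 2) + 6 * L * \<delta>) + 8)"

lemma log_bound:
  fixes D K L \<delta> :: real
  assumes "D \<ge> 0" "L \<ge> 0" "\<delta> \<ge> 0" "K \<ge> 0"
    and H: "\<And>k::nat. 6 * L * D + 2 \<le> 2 ^ k \<Longrightarrow> D \<le> K + real k * \<delta>"
  shows "D \<le> Dm K L \<delta>"
proof -
  have ex: "\<exists>k::nat. 6 * L * D + 2 \<le> 2 ^ k"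
  proof -
    obtain k :: nat where "6 * L * D + 2 \<le> real k" using real_arch_simple by blast
    moreover have "real k \<le> 2 ^ k" using less_exp[of k]
      by (metis less_imp_le of_nat_le_iff of_nat_numeral of_nat_power)
    ultimately show ?thesis by (intro exI[of _ k]) linarith
  qed
  define k where "k = (LEAST k::nat. 6 * L * D + 2 \<le> 2 ^ k)"
  have k1: "6 * L * D + 2 \<le> 2 ^ k" unfolding k_def using LeastI_ex[OF ex] .
  have Dk: "D \<le> K + real k * \<delta>" using H[OF k1] .
  show ?thesis
  proof (cases "k = 0")
    case True
    have "0 \<le> \<delta> * (8 * ((6 * L * K + 2) + 6 * L * \<delta>) + 8)" using assms by (intro mult_nonneg_nonneg) auto
    then show ?thesis using Dk True by (simp add: Dm_def)
  next
    case False
    then have "\<not> (6 * L * D + 2 \<le> 2 ^ (k - 1))" unfolding k_def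
      using not_less_Least[of "k - 1" "\<lambda>k. 6 * L * D + 2 \<le> 2 ^ k"] k_def by auto
    then have "2 ^ (k - 1) < 6 * L * D + 2" by simp
    also have "\<dots> \<le> 6 * L * (K + real k * \<delta>) + 2" using Dk assms by (intro add_mono mult_left_mono) auto
    also have "\<dots> = (6 * L * K + 2) + (6 * L * \<delta>) * real k" by (simp add: algebra_simps)
    finally have "real k < 8 * ((6 * L * K + 2) + 6 * L * \<delta>) + 8"
      using False assms by (intro pow_bound) auto
    then have "real k * \<delta> \<le> \<delta> * (8 * ((6 * L * K + 2) + 6 * L * \<delta>) + 8)"
      using assms(3) by (simp add: mult.commute mult_left_mono)
    then show ?thesis using Dk by (simp add: Dm_def)
  qed
qed



locale hypg = wgen +
  fixes \<delta> :: real
  assumes delta_nonneg: "\<delta> \<ge> 0"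
    and four: "\<And>w x y z. w \<in> carrier G \<Longrightarrow> x \<in> carrier G \<Longrightarrow> y \<in> carrier G \<Longrightarrow> z \<in> carrier G \<Longrightarrow>
        gromov_product G A w x z \<ge> min (gromov_product G A w x y) (gromov_product G A w y z) - \<delta>"
begin

abbreviation gp where "gp \<equiv> gromov_product G A"

lemma gp_def': "gp w x y = (real (dist w x) + real (dist w y) - real (dist x y)) / 2"
  unfolding gromov_product_def dist_def ..

lemma gp_sym: "x \<in> carrier G \<Longrightarrow> y \<in> carrier G \<Longrightarrow> gp w x y = gp w y x"
  unfolding gp_def' using dist_sym by simp

lemma gp_lower: "w \<in> carrier G \<Longrightarrow> x \<in> carrier G \<Longrightarrow> y \<in> carrier G \<Longrightarrow> gp w x y \<ge> real (dist w x) - real (dist x y)"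
proof -
  assume c: "w \<in> carrier G" "x \<in> carrier G" "y \<in> carrier G"
  have "dist w x \<le> dist w y + dist y x" using dist_tri c by blast
  then show ?thesis unfolding gp_def' using dist_sym c by simp
qed

lemma gp_lower2: "w \<in> carrier G \<Longrightarrow> x \<in> carrier G \<Longrightarrow> y \<in> carrier G \<Longrightarrow> gp w x y \<ge> real (dist w y) - real (dist x y)"
  using gp_lower[of w y x] gp_sym dist_sym by simp

lemma chain:
  assumes "z \<in> carrier G"
  shows "(\<forall>i \<le> n. p i \<in> carrier G) \<Longrightarrow> 1 \<le> n \<Longrightarrow> n \<le> 2 ^ k \<Longrightarrow>
     (\<forall>i < n. gp z (p i) (p (Suc i)) \<ge> m) \<Longrightarrow> gp z (p 0) (p n) \<ge> m - real k * \<delta>"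
proof (induction k arbitrary: p n)
  case 0
  then have "n = 1" by simp
  then show ?case using 0 by auto
next
  case (Suc k)
  show ?case
  proof (cases "n \<le> 2 ^ k")
    case True
    then have "gp z (p 0) (p n) \<ge> m - real k * \<delta>" using Suc by blast
    then show ?thesis using delta_nonneg by (simp add: algebra_simps)
  next
    case False
    define h where "h = (2::nat) ^ k"
    have h1: "1 \<le> h" "h < n" "n - h \<le> 2 ^ k" using False Suc.prems(3) by (auto simp: h_def)
    have A: "gp z (p 0) (p h) \<ge> m - real k * \<delta>"
      using Suc.IH[where p=p and n=h] Suc.prems h1 by (auto simp: h_def)
    have B: "gp z (p (h + 0)) (p (h + (n - h))) \<ge> m - real k * \<delta>"
      using Suc.IH[where p="\<lambda>i. p (h + i)" and n="n - h"] Suc.prems h1 by auto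
    have "gp z (p 0) (p n) \<ge> min (gp z (p 0) (p h)) (gp z (p h) (p n)) - \<delta>"
      using four[OF assms] Suc.prems h1 by simp
    then show ?thesis using A B h1 by (simp add: algebra_simps)
  qed
qed

lemma geod_dist: "geod \<gamma> x y \<Longrightarrow> i \<le> j \<Longrightarrow> j \<le> dist x y \<Longrightarrow> dist (\<gamma> i) (\<gamma> j) = j - i"
  unfolding geod_def by blast

lemma geod_carr: "geod \<gamma> x y \<Longrightarrow> i \<le> dist x y \<Longrightarrow> \<gamma> i \<in> carrier G"
  unfolding geod_def by blast

lemma geod_dist': "geod \<gamma> x y \<Longrightarrow> i \<le> j \<Longrightarrow> j \<le> dist x y \<Longrightarrow> dist (\<gamma> j) (\<gamma> i) = j - i"
  using geod_dist geod_carr dist_sym by (metis le_trans)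

lemma morse:
  fixes c :: "nat \<Rightarrow> 'a" and K :: nat and L :: real
  assumes L0: "L \<ge> 0"
    and cc: "\<forall>l \<le> m. c l \<in> carrier G" and c0: "c 0 = x" and cm: "c m = y"
    and jump: "\<forall>l < m. dist (c l) (c (Suc l)) \<le> K"
    and qg: "\<forall>l l'. l \<le> l' \<longrightarrow> l' \<le> m \<longrightarrow> real (l' - l) \<le> L * real (dist (c l) (c l'))"
    and geo: "geod \<gamma> x y" and xc: "x \<in> carrier G" and yc: "y \<in> carrier G"
  shows "\<forall>s \<le> dist x y. \<exists>l \<le> m. real (dist (\<gamma> s) (c l)) \<le> Dm (real K) L \<delta>"
proof -
  define n where "n = dist x y"
  have gc: "\<And>s. s \<le> n \<Longrightarrow> \<gamma> s \<in> carrier G" using geo geod_carr n_def by blast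
  define f where "f s = Min ((\<lambda>l. dist (\<gamma> s) (c l)) ` {..m})" for s
  define D where "D = Max (f ` {..n})"
  have fin: "finite ((\<lambda>l. dist (\<gamma> s) (c l)) ` {..m})" for s by simp
  have fle: "\<exists>l \<le> m. dist (\<gamma> s) (c l) \<le> D" if "s \<le> n" for s
  proof -
    have "f s \<in> (\<lambda>l. dist (\<gamma> s) (c l)) ` {..m}" unfolding f_def by (intro Min_in) auto
    then obtain l where "l \<le> m" "f s = dist (\<gamma> s) (c l)" by auto
    moreover have "f s \<le> D" unfolding D_def using that by (intro Max_ge) auto
    ultimately show ?thesis by auto
  qed
  have "D \<in> f ` {..n}" unfolding D_def by (rule Max_in) auto
  then obtain s0 where s0: "s0 \<le> n" "f s0 = D" by auto
  have Dle: "D \<le> dist (\<gamma> s0) (c l)" if "l \<le> m" for l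
    using s0 that unfolding f_def by (metis (no_types, lifting) Min_le atMost_iff fin image_eqI)
  have key: "real D \<le> Dm (real K) L \<delta>"
  proof (rule log_bound)
    show "0 \<le> real D" "0 \<le> L" "0 \<le> \<delta>" "0 \<le> real K" using L0 delta_nonneg by auto
    fix k :: nat assume hk: "6 * L * real D + 2 \<le> 2 ^ k"
    define s1 where "s1 = s0 - 2 * D"
    define s2 where "s2 = min (s0 + 2 * D) n"
    have s12: "s1 \<le> s0" "s0 \<le> s2" "s2 \<le> n" "s2 - s1 \<le> 4 * D" using s0 by (auto simp: s1_def s2_def)
    obtain l1 where l1: "l1 \<le> m" "dist (\<gamma> s1) (c l1) \<le> D"
      "real D \<le> real (dist (\<gamma> s0) (\<gamma> s1)) - real (dist (\<gamma> s1) (c l1))"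
    proof (cases "2 * D \<le> s0")
      case True
      then have "dist (\<gamma> s0) (\<gamma> s1) = 2 * D"
        using geod_dist'[OF geo, of s1 s0] s0 s12 by (simp add: s1_def n_def)
      moreover have "s1 \<le> n" using s12 s0 by linarith
      moreover obtain l where "l \<le> m" "dist (\<gamma> s1) (c l) \<le> D" using fle[of s1] s12 s0 by auto
      ultimately show ?thesis using that by force
    next
      case False
      then have "s1 = 0" by (simp add: s1_def)
      then have "\<gamma> s1 = c 0" using geo c0 by (simp add: geod_def)
      then show ?thesis using that[of 0] Dle[of 0] cc by simp
    qed
    obtain l2 where l2: "l2 \<le> m" "dist (\<gamma> s2) (c l2) \<le> D"
      "real D \<le> real (dist (\<gamma> s0) (\<gamma> s2)) - real (dist (c l2) (\<gamma> s2))"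
    proof (cases "s0 + 2 * D \<le> n")
      case True
      then have e: "s2 = s0 + 2 * D" by (simp add: s2_def)
      then have "dist (\<gamma> s0) (\<gamma> s2) = 2 * D"
        using geod_dist[OF geo, of s0 s2] s12 by (simp add: n_def)
      moreover obtain l where l: "l \<le> m" "dist (\<gamma> s2) (c l) \<le> D" using fle[of s2] s12 by auto
      moreover have "dist (c l) (\<gamma> s2) = dist (\<gamma> s2) (c l)" using dist_sym cc gc s12 l by auto
      ultimately show ?thesis using that by force
    next
      case False
      then have "s2 = n" by (simp add: s2_def)
      then have "\<gamma> s2 = c m" using geo cm by (simp add: geod_def n_def)
      then show ?thesis using that[of m] Dle[of m] cc by (simp add: dist_sym)
    qed
    define N where "N = (if l1 \<le> l2 then l2 - l1 else l1 - l2)"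
    define idx where "idx j = (if l1 \<le> l2 then l1 + j else l1 - j)" for j
    have idx0: "idx 0 = l1" and idxN: "idx N = l2" by (auto simp: idx_def N_def)
    have idxm: "idx j \<le> m" if "j \<le> N" for j using that l1 l2 by (auto simp: idx_def N_def)
    define q where "q i = (if i = 0 then \<gamma> s1 else if i \<le> N + 1 then c (idx (i - 1)) else \<gamma> s2)" for i
    have qc: "\<forall>i \<le> N + 2. q i \<in> carrier G"
      using gc s12 cc idxm by (auto simp: q_def)
    have x0c: "\<gamma> s0 \<in> carrier G" using gc s0 by simp
    have steps: "\<forall>i < N + 2. gp (\<gamma> s0) (q i) (q (Suc i)) \<ge> real D - real K"
    proof (intro allI impI)
      fix i assume i: "i < N + 2"
      show "gp (\<gamma> s0) (q i) (q (Suc i)) \<ge> real D - real K"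
      proof (cases "i = 0")
        case True
        then have "gp (\<gamma> s0) (q i) (q (Suc i)) \<ge> real (dist (\<gamma> s0) (\<gamma> s1)) - real (dist (\<gamma> s1) (c l1))"
          using gp_lower[OF x0c, of "\<gamma> s1" "c l1"] gc s12 cc l1 by (simp add: q_def idx0)
        then show ?thesis using l1 by linarith
      next
        case False
        show ?thesis
        proof (cases "i = N + 1")
          case True
          then have "gp (\<gamma> s0) (q i) (q (Suc i)) \<ge> real (dist (\<gamma> s0) (\<gamma> s2)) - real (dist (c l2) (\<gamma> s2))"
            using gp_lower2[OF x0c, of "c l2" "\<gamma> s2"] gc s12 cc l2 by (simp add: q_def idxN)
          then show ?thesis using l2 by linarith
        next
          case False
          with \<open>i \<noteq> 0\<close> i have i1: "1 \<le> i" "i \<le> N" by auto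
          have qi: "q i = c (idx (i - 1))" "q (Suc i) = c (idx i)" using i1 by (auto simp: q_def)
          have m1: "idx (i - 1) \<le> m" "idx i \<le> m" using idxm i1 by auto
          have jd: "dist (c (idx (i - 1))) (c (idx i)) \<le> K"
          proof (cases "l1 \<le> l2")
            case True
            then have "idx i = Suc (idx (i - 1))" using i1 by (simp add: idx_def)
            then show ?thesis using jump m1 by (metis Suc_le_lessD)
          next
            case False
            then have "idx (i - 1) = Suc (idx i)" using i1 by (auto simp: idx_def N_def)
            then show ?thesis using jump m1 dist_sym cc
              by (metis Suc_le_lessD le_Suc_eq)
          qed
          have "gp (\<gamma> s0) (q i) (q (Suc i)) \<ge> real (dist (\<gamma> s0) (c (idx (i - 1)))) - real (dist (c (idx (i - 1))) (c (idx i)))"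
            unfolding qi using gp_lower[OF x0c] cc m1 by simp
          then show ?thesis using jd Dle[OF m1(1)] by linarith
        qed
      qed
    qed
    have dl: "dist (c l1) (c l2) \<le> 6 * D"
    proof -
      have "dist (c l1) (c l2) \<le> dist (c l1) (\<gamma> s1) + dist (\<gamma> s1) (c l2)"
        using dist_tri cc gc l1 l2 s12 by auto
      also have "dist (\<gamma> s1) (c l2) \<le> dist (\<gamma> s1) (\<gamma> s2) + dist (\<gamma> s2) (c l2)"
        using dist_tri cc gc l1 l2 s12 by auto
      finally have "dist (c l1) (c l2) \<le> dist (c l1) (\<gamma> s1) + dist (\<gamma> s1) (\<gamma> s2) + dist (\<gamma> s2) (c l2)" by simp
      moreover have "dist (c l1) (\<gamma> s1) = dist (\<gamma> s1) (c l1)" using dist_sym cc gc l1 s12 by auto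
      moreover have "dist (\<gamma> s1) (\<gamma> s2) = s2 - s1" using geod_dist[OF geo, of s1 s2] s12 by (simp add: n_def)
      ultimately show ?thesis using l1 l2 s12 by linarith
    qed
    have "real N \<le> L * real (dist (c l1) (c l2))"
    proof (cases "l1 \<le> l2")
      case True then show ?thesis using qg l2 by (simp add: N_def)
    next
      case False
      then have "real N \<le> L * real (dist (c l2) (c l1))" using qg l1 by (simp add: N_def)
      then show ?thesis using dist_sym cc l1 l2 by simp
    qed
    also have "\<dots> \<le> L * (6 * real D)" using dl L0 by (intro mult_left_mono) auto
    finally have "real (N + 2) \<le> 2 ^ k" using hk by (simp add: algebra_simps)
    then have N2: "N + 2 \<le> 2 ^ k" by (metis of_nat_le_iff of_nat_numeral of_nat_power)
    have ch: "gp (\<gamma> s0) (q 0) (q (N + 2)) \<ge> (real D - real K) - real k * \<delta>"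
      using chain[OF x0c, of "N + 2" q k] qc N2 steps by auto
    have "q 0 = \<gamma> s1" "q (N + 2) = \<gamma> s2" by (auto simp: q_def)
    moreover have "gp (\<gamma> s0) (\<gamma> s1) (\<gamma> s2) = 0"
    proof -
      have "dist (\<gamma> s0) (\<gamma> s1) = s0 - s1" using geod_dist'[OF geo, of s1 s0] s12 by (simp add: n_def)
      moreover have "dist (\<gamma> s0) (\<gamma> s2) = s2 - s0" using geod_dist[OF geo, of s0 s2] s12 by (simp add: n_def)
      moreover have "dist (\<gamma> s1) (\<gamma> s2) = s2 - s1" using geod_dist[OF geo, of s1 s2] s12 by (simp add: n_def)
      ultimately show ?thesis unfolding gp_def' using s12 by (simp add: of_nat_diff)
    qed
    ultimately show "real D \<le> real K + real k * \<delta>" using ch by simp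
  qed
  show ?thesis
  proof (intro allI impI)
    fix s assume "s \<le> dist x y"
    then obtain l where "l \<le> m" "dist (\<gamma> s) (c l) \<le> D" using fle n_def by blast
    then show "\<exists>l \<le> m. real (dist (\<gamma> s) (c l)) \<le> Dm (real K) L \<delta>" using key
      by (intro exI[of _ l]) auto
  qed
qed

lemma tripod:
  assumes g: "g \<in> carrier G" and h: "h \<in> carrier G"
    and ga: "geod \<alpha> \<one> g" and gb: "geod \<beta> g (g \<otimes> h)" and gc: "geod \<gamma> \<one> (g \<otimes> h)"
  shows "\<exists>t j. t \<le> dist \<one> g \<and> t \<le> dist \<one> (g \<otimes> h) \<and> j \<le> dist g (g \<otimes> h) \<and>
     real (dist (\<alpha> t) (\<gamma> t)) \<le> 4 * \<delta> \<and> real (dist (\<alpha> t) (\<beta> j)) \<le> 4 * \<delta> + 2"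
proof -
  have gh: "g \<otimes> h \<in> carrier G" using g h by simp
  define a where "a = dist \<one> g"
  define b where "b = dist g (g \<otimes> h)"
  define c where "c = dist \<one> (g \<otimes> h)"
  have tri: "b \<le> a + c" "a \<le> b + c" "c \<le> a + b"
    using dist_tri[of g \<one> "g \<otimes> h"] dist_tri[of \<one> "g \<otimes> h" g] dist_tri[of \<one> g "g \<otimes> h"]
      dist_sym[of \<one> g] dist_sym[of g "g \<otimes> h"] g gh by (auto simp: a_def b_def c_def)
  define T where "T = gp \<one> g (g \<otimes> h)"
  have T: "T = (real a + real c - real b) / 2" unfolding T_def gp_def' a_def b_def c_def ..
  define t where "t = nat \<lfloor>T\<rfloor>"
  have trir: "real b \<le> real a + real c" "real a \<le> real b + real c" "real c \<le> real a + real b"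
    using tri by (metis of_nat_add of_nat_le_iff)+
  have T0: "T \<ge> 0" using trir T by simp
  have tT1: "real t \<le> T" using T0 unfolding t_def by linarith
  have tT2: "T < real t + 1" using T0 unfolding t_def by linarith
  note tT = tT1 tT2
  have "real t \<le> real a" using tT T trir by argo
  moreover have "real t \<le> real c" using tT T trir by argo
  ultimately have ta: "t \<le> a" "t \<le> c" by simp_all
  define j where "j = min (a - t) b"
  have jb: "j \<le> b" by (simp add: j_def)
  define u where "u = \<alpha> t"
  define v where "v = \<gamma> t"
  define w where "w = \<beta> j"
  have uc: "u \<in> carrier G" using geod_carr[OF ga] ta by (simp add: u_def a_def)
  have vc: "v \<in> carrier G" using geod_carr[OF gc] ta by (simp add: v_def c_def)
  have wc: "w \<in> carrier G" using geod_carr[OF gb] jb by (simp add: w_def b_def)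
  have a0: "\<alpha> 0 = \<one>" "\<alpha> a = g" using ga by (auto simp: geod_def a_def)
  have c0: "\<gamma> 0 = \<one>" "\<gamma> c = g \<otimes> h" using gc by (auto simp: geod_def c_def)
  have b0: "\<beta> 0 = g" "\<beta> b = g \<otimes> h" using gb by (auto simp: geod_def b_def)
  have d1u: "dist \<one> u = t" using geod_dist[OF ga, of 0 t] ta a0 by (simp add: u_def a_def)
  have dug: "dist u g = a - t" using geod_dist[OF ga, of t a] ta a0 by (simp add: u_def a_def)
  have d1v: "dist \<one> v = t" using geod_dist[OF gc, of 0 t] ta c0 by (simp add: v_def c_def)
  have dvgh: "dist v (g \<otimes> h) = c - t" using geod_dist[OF gc, of t c] ta c0 by (simp add: v_def c_def)
  have dgw: "dist g w = j" using geod_dist[OF gb, of 0 j] jb b0 by (simp add: w_def b_def)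
  have dwgh: "dist w (g \<otimes> h) = b - j" using geod_dist[OF gb, of j b] jb b0 by (simp add: w_def b_def)
  have gu: "gp \<one> u g = real t" unfolding gp_def' using d1u dug ta by (simp add: a_def of_nat_diff)
  have gv: "gp \<one> (g \<otimes> h) v = real t" unfolding gp_def' using d1v dvgh ta dist_sym[OF gh vc]
    by (simp add: c_def of_nat_diff)
  have "gp \<one> u (g \<otimes> h) \<ge> min (gp \<one> u g) (gp \<one> g (g \<otimes> h)) - \<delta>" using four uc g gh by simp
  then have f1: "gp \<one> u (g \<otimes> h) \<ge> real t - \<delta>" using gu tT delta_nonneg unfolding T_def by linarith
  have "gp \<one> u v \<ge> min (gp \<one> u (g \<otimes> h)) (gp \<one> (g \<otimes> h) v) - \<delta>" using four uc vc gh by simp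
  then have f2: "gp \<one> u v \<ge> real t - 2 * \<delta>" using f1 gv delta_nonneg by linarith
  have duv: "real (dist u v) \<le> 4 * \<delta>" using f2 unfolding gp_def' d1u d1v by argo
  have dgu: "dist g u = a - t" using dug dist_sym uc g by simp
  have gu': "gp g u \<one> = real a - real t" unfolding gp_def' using dgu d1u ta dist_sym[of g \<one>] dist_sym[of u \<one>] g uc
    by (simp add: a_def of_nat_diff)
  have g1gh: "gp g \<one> (g \<otimes> h) = real a - T" unfolding gp_def' T
    using dist_sym[of g \<one>] g by (simp add: a_def b_def c_def field_simps)
  have gw: "gp g (g \<otimes> h) w = real j" unfolding gp_def' using dgw dwgh jb dist_sym[OF gh wc] b_def
    by (simp add: of_nat_diff)
  have "gp g u (g \<otimes> h) \<ge> min (gp g u \<one>) (gp g \<one> (g \<otimes> h)) - \<delta>" using four g uc gh by simp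
  then have f3: "gp g u (g \<otimes> h) \<ge> real a - T - \<delta>" using gu' g1gh tT delta_nonneg by linarith
  have jT: "real j \<ge> real a - T" using tT T trir ta by (simp add: j_def of_nat_diff)
  have "gp g u w \<ge> min (gp g u (g \<otimes> h)) (gp g (g \<otimes> h) w) - \<delta>" using four g uc gh wc by simp
  then have f4: "gp g u w \<ge> real a - T - 2 * \<delta>" using f3 gw jT delta_nonneg by linarith
  have "real (dist u w) \<le> 4 * \<delta> + 2"
  proof -
    have "real (dist u w) = real (dist g u) + real (dist g w) - 2 * gp g u w" unfolding gp_def' by argo
    also have "\<dots> \<le> (real a - real t) + real j - 2 * (real a - T - 2 * \<delta>)"
      using dgu dgw f4 ta by (simp add: of_nat_diff)
    also have "\<dots> \<le> 4 * \<delta> + 2" using tT ta by (simp add: j_def of_nat_diff)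
    finally show ?thesis .
  qed
  then show ?thesis using duv ta jb
    by (intro exI[of _ t] exI[of _ j]) (simp add: u_def v_def w_def a_def b_def c_def)
qed

end


lemma rat_group_group: "group rat_group"
  unfolding rat_group_def
  by (rule groupI) (auto intro: exI[of _ "- _"])

lemma rat_group_simps [simp]: "carrier rat_group = UNIV" "x \<otimes>\<^bsub>rat_group\<^esub> y = x + y"
  "\<one>\<^bsub>rat_group\<^esub> = 0"
  by (auto simp: rat_group_def)

lemma rat_group_inv [simp]: "inv\<^bsub>rat_group\<^esub> x = - x"
  using group.inv_equality[OF rat_group_group, of "-x" x] by simp

locale cext =
  fixes E :: "('e,'m) monoid_scheme" and \<iota> :: "int \<Rightarrow> 'e"
  assumes grpE: "group E" and ihom: "\<iota> \<in> hom integer_group E" and iinj: "inj \<iota>"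
    and icent: "\<And>n e. e \<in> carrier E \<Longrightarrow> \<iota> n \<otimes>\<^bsub>E\<^esub> e = e \<otimes>\<^bsub>E\<^esub> \<iota> n"
begin

lemma iota_carr [simp]: "\<iota> n \<in> carrier E"
  using ihom by (auto simp: hom_def)

lemma iota_add: "\<iota> (m + n) = \<iota> m \<otimes>\<^bsub>E\<^esub> \<iota> n"
  using ihom by (auto simp: hom_def)

lemma iota_0 [simp]: "\<iota> 0 = \<one>\<^bsub>E\<^esub>"
proof -
  interpret group E by (rule grpE)
  have "\<iota> 0 \<otimes>\<^bsub>E\<^esub> \<iota> 0 = \<iota> 0 \<otimes>\<^bsub>E\<^esub> \<one>\<^bsub>E\<^esub>" using iota_add[of 0 0] by simp
  then show ?thesis by (metis l_cancel iota_carr one_closed)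
qed

lemma iota_neg: "\<iota> (- n) = inv\<^bsub>E\<^esub> (\<iota> n)"
proof -
  interpret group E by (rule grpE)
  have "\<iota> (- n) \<otimes>\<^bsub>E\<^esub> \<iota> n = \<one>\<^bsub>E\<^esub>" using iota_add[of "-n" n] by simp
  then show ?thesis by (simp add: group.inv_equality grpE)
qed

definition P where "P = E \<times>\<times> rat_group"
definition K where "K = pushout_kernel E \<iota>"
definition Phi where "Phi a r = K #>\<^bsub>P\<^esub> (a, r)"

lemma grpP: "group P" unfolding P_def by (rule DirProd_group[OF grpE rat_group_group])

lemma K_normal: "K \<lhd> P"
proof -
  interpret P: group P by (rule grpP)
  interpret group E by (rule grpE)
  have sub: "subgroup K P"
  proof
    show "K \<subseteq> carrier P" by (auto simp: K_def P_def pushout_kernel_def)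
    show "\<one>\<^bsub>P\<^esub> \<in> K" by (auto simp: K_def P_def pushout_kernel_def intro!: image_eqI[of _ _ 0])
    fix x y assume "x \<in> K" "y \<in> K"
    then obtain m n where "x = (\<iota> m, - of_int m)" "y = (\<iota> n, - of_int n)"
      by (auto simp: K_def pushout_kernel_def)
    then show "x \<otimes>\<^bsub>P\<^esub> y \<in> K"
      by (auto simp: K_def P_def pushout_kernel_def iota_add intro!: image_eqI[of _ _ "m+n"])
  next
    fix x assume "x \<in> K"
    then obtain m where x: "x = (\<iota> m, - of_int m)"
      by (auto simp: K_def pushout_kernel_def)
    have "inv\<^bsub>P\<^esub> x = (\<iota> (-m), of_int m)"
      unfolding P_def x by (simp add: inv_DirProd grpE rat_group_group iota_neg)
    then show "inv\<^bsub>P\<^esub> x \<in> K"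
      by (auto simp: K_def pushout_kernel_def intro!: image_eqI[of _ _ "-m"])
  qed
  show ?thesis
  proof (rule P.normalI[OF sub], intro ballI)
    fix x assume x: "x \<in> carrier P"
    then obtain a r where xr: "x = (a, r)" "a \<in> carrier E" by (auto simp: P_def)
    have "K #>\<^bsub>P\<^esub> x = {(\<iota> n \<otimes>\<^bsub>E\<^esub> a, r - of_int n) | n. True}"
      by (auto simp: r_coset_def K_def pushout_kernel_def P_def xr)
    also have "\<dots> = {(a \<otimes>\<^bsub>E\<^esub> \<iota> n, - of_int n + r) | n. True}"
      using icent[OF xr(2)] by simp
    also have "\<dots> = x <#\<^bsub>P\<^esub> K"
      by (auto simp: l_coset_def K_def pushout_kernel_def P_def xr)
    finally show "K #>\<^bsub>P\<^esub> x = x <#\<^bsub>P\<^esub> K" .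
  qed
qed

lemma EQ_eq: "EQ E \<iota> = P Mod K" unfolding EQ_def P_def K_def ..

lemma Phi_hom: "(\<lambda>x. K #>\<^bsub>P\<^esub> x) \<in> hom P (EQ E \<iota>)"
  unfolding EQ_eq by (rule normal.r_coset_hom_Mod[OF K_normal])

lemma grpEQ: "group (EQ E \<iota>)"
  unfolding EQ_eq by (rule normal.factorgroup_is_group[OF K_normal])

lemma Phi_mult: "a \<in> carrier E \<Longrightarrow> b \<in> carrier E \<Longrightarrow>
   Phi a r \<otimes>\<^bsub>EQ E \<iota>\<^esub> Phi b s = Phi (a \<otimes>\<^bsub>E\<^esub> b) (r + s)"
  using Phi_hom unfolding Phi_def hom_def by (auto simp: P_def)

lemma Phi_carr: "a \<in> carrier E \<Longrightarrow> Phi a r \<in> carrier (EQ E \<iota>)"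
  using Phi_hom unfolding Phi_def hom_def by (auto simp: P_def)

lemma Phi_inv: "a \<in> carrier E \<Longrightarrow> inv\<^bsub>EQ E \<iota>\<^esub> Phi a r = Phi (inv\<^bsub>E\<^esub> a) (- r)"
proof -
  assume a: "a \<in> carrier E"
  interpret Q: group "EQ E \<iota>" by (rule grpEQ)
  have "Phi a r \<otimes>\<^bsub>EQ E \<iota>\<^esub> Phi (inv\<^bsub>E\<^esub> a) (- r) = Phi \<one>\<^bsub>E\<^esub> 0"
    using a Phi_mult[of a "inv\<^bsub>E\<^esub> a" r "-r"] by (simp add: group.r_inv[OF grpE] group.inv_closed[OF grpE])
  also have "Phi \<one>\<^bsub>E\<^esub> 0 = \<one>\<^bsub>EQ E \<iota>\<^esub>"
    using Phi_hom grpP grpEQ unfolding Phi_def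
    by (metis P_def group_hom.hom_one group_hom.intro group_hom_axioms.intro one_DirProd rat_group_simps(3))
  finally show ?thesis
    using a by (metis Phi_carr Q.inv_equality Q.inv_inv Q.inv_closed Q.inv_unique' group.inv_closed[OF grpE] Q.l_inv Q.r_inv)
qed

lemma subK: "subgroup K P" using K_normal normal_imp_subgroup by blast

lemma Phi_iota: "a \<in> carrier E \<Longrightarrow> Phi (\<iota> n \<otimes>\<^bsub>E\<^esub> a) r = Phi a (r + of_int n)"
proof -
  assume a: "a \<in> carrier E"
  have "(\<iota> n \<otimes>\<^bsub>E\<^esub> a, r) \<in> K #>\<^bsub>P\<^esub> (a, r + of_int n)"
    unfolding r_coset_def K_def pushout_kernel_def P_def
    by (auto intro!: bexI[of _ "(\<iota> n, - of_int n)"])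
  then show ?thesis unfolding Phi_def
    using group.repr_independence[OF grpP _ _ subK] a by (auto simp: P_def)
qed

lemma iotaQ_Phi: "iotaQ E \<iota> r = Phi \<one>\<^bsub>E\<^esub> r"
  unfolding iotaQ_def Phi_def K_def P_def ..

lemma embQ_Phi: "embQ E \<iota> a = Phi a 0"
  unfolding embQ_def Phi_def K_def P_def ..

lemma Phi_inj1: "Phi \<one>\<^bsub>E\<^esub> r = Phi \<one>\<^bsub>E\<^esub> s \<Longrightarrow> r = s"
proof -
  assume "Phi \<one>\<^bsub>E\<^esub> r = Phi \<one>\<^bsub>E\<^esub> s"
  then have "(\<one>\<^bsub>E\<^esub>, s) \<in> K #>\<^bsub>P\<^esub> (\<one>\<^bsub>E\<^esub>, r)"
    unfolding Phi_def using group.repr_independenceD[OF grpP subK, of "(\<one>\<^bsub>E\<^esub>, s)"]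
    by (auto simp: P_def group.is_monoid[OF grpE])
  then obtain n where "\<one>\<^bsub>E\<^esub> = \<iota> n \<otimes>\<^bsub>E\<^esub> \<one>\<^bsub>E\<^esub>" "s = - of_int n + r"
    unfolding r_coset_def K_def pushout_kernel_def P_def by auto
  then have "\<iota> n = \<iota> 0" "s = - of_int n + r" by (auto simp: group.is_monoid[OF grpE])
  then show "r = s" using injD[OF iinj, of n 0] by simp
qed

lemma avg_lemma:
  assumes a: "a \<in> carrier E" and b: "b \<in> carrier E" and ab: "a \<otimes>\<^bsub>E\<^esub> b = \<iota> (- n)"
  shows "fibre_avg E \<iota> (embQ E \<iota> a) (inv\<^bsub>EQ E \<iota>\<^esub> (embQ E \<iota> b)) = Phi a (of_int n / 2)"
proof -
  interpret group E by (rule grpE)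
  have binv: "inv\<^bsub>E\<^esub> b = \<iota> n \<otimes>\<^bsub>E\<^esub> a"
  proof -
    have "b = inv\<^bsub>E\<^esub> a \<otimes>\<^bsub>E\<^esub> \<iota> (- n)" using ab a b
      by (metis inv_solve_left iota_carr m_closed)
    then show ?thesis using a b by (simp add: inv_mult_group iota_neg icent)
  qed
  have h2: "inv\<^bsub>EQ E \<iota>\<^esub> (embQ E \<iota> b) = Phi a (of_int n)"
    using b by (simp add: embQ_Phi Phi_inv binv Phi_iota a)
  have "embQ E \<iota> a \<otimes>\<^bsub>EQ E \<iota>\<^esub> inv\<^bsub>EQ E \<iota>\<^esub> (Phi a (of_int n)) = iotaQ E \<iota> (- of_int n)"
    using a by (simp add: embQ_Phi Phi_inv Phi_mult iotaQ_Phi)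
  then have th: "(THE r. iotaQ E \<iota> r = embQ E \<iota> a \<otimes>\<^bsub>EQ E \<iota>\<^esub> inv\<^bsub>EQ E \<iota>\<^esub> (Phi a (of_int n))) = - of_int n"
    by (auto simp: iotaQ_Phi dest: Phi_inj1)
  show ?thesis unfolding fibre_avg_def h2 th
    using a by (simp add: iotaQ_Phi Phi_mult)
qed

lemma cocycle_lemma:
  assumes a: "a \<in> carrier E" and b: "b \<in> carrier E" and c: "c \<in> carrier E"
    and m: "inv\<^bsub>E\<^esub> a \<otimes>\<^bsub>E\<^esub> b \<otimes>\<^bsub>E\<^esub> c = \<iota> m"
  shows "inv\<^bsub>EQ E \<iota>\<^esub> (Phi a r) \<otimes>\<^bsub>EQ E \<iota>\<^esub> Phi b s \<otimes>\<^bsub>EQ E \<iota>\<^esub> Phi c u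
         = iotaQ E \<iota> (of_int m - r + s + u)"
proof -
  interpret group E by (rule grpE)
  have "inv\<^bsub>EQ E \<iota>\<^esub> (Phi a r) \<otimes>\<^bsub>EQ E \<iota>\<^esub> Phi b s \<otimes>\<^bsub>EQ E \<iota>\<^esub> Phi c u
     = Phi (\<iota> m \<otimes>\<^bsub>E\<^esub> \<one>\<^bsub>E\<^esub>) (- r + s + u)"
    using a b c m by (simp add: Phi_inv Phi_mult)
  also have "\<dots> = iotaQ E \<iota> (of_int m - r + s + u)"
    using Phi_iota[of "\<one>\<^bsub>E\<^esub>" m "- r + s + u"] by (simp add: iotaQ_Phi algebra_simps)
  finally show ?thesis .
qed

end


context group begin
lemma inv_cancel_l [simp]: "x \<in> carrier G \<Longrightarrow> y \<in> carrier G \<Longrightarrow> inv x \<otimes> (x \<otimes> y) = y"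
  by (simp add: m_assoc[symmetric])
lemma inv_cancel_r [simp]: "x \<in> carrier G \<Longrightarrow> y \<in> carrier G \<Longrightarrow> x \<otimes> (inv x \<otimes> y) = y"
  by (simp add: m_assoc[symmetric])
end

locale coc = group +
  fixes F :: "'a \<Rightarrow> 'a \<Rightarrow> int"
  assumes cocy: "\<And>x y z. x \<in> carrier G \<Longrightarrow> y \<in> carrier G \<Longrightarrow> z \<in> carrier G \<Longrightarrow>
      F x y + F (x \<otimes> y) z = F y z + F x (y \<otimes> z)"
    and Fpos: "\<And>x y. x \<in> carrier G \<Longrightarrow> y \<in> carrier G \<Longrightarrow> F x y \<ge> 0"
    and F1r: "\<And>x. x \<in> carrier G \<Longrightarrow> F x \<one> = 0"
    and F1l: "\<And>x. x \<in> carrier G \<Longrightarrow> F \<one> x = 0"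
begin

definition e where "e x = F x (inv x)"

lemma e_inv: "s \<in> carrier G \<Longrightarrow> e (inv s) = e s"
  using cocy[of s "inv s" s] F1r[of s] F1l[of s] unfolding e_def by simp

lemma e_mult: "x \<in> carrier G \<Longrightarrow> s \<in> carrier G \<Longrightarrow>
   e (x \<otimes> s) = e x + e s - F x s - F (inv s) (inv x)"
proof -
  assume c: "x \<in> carrier G" "s \<in> carrier G"
  have c1: "F x s + F (x \<otimes> s) (inv s \<otimes> inv x) = F s (inv s \<otimes> inv x) + F x (inv x)"
    using cocy[of x s "inv s \<otimes> inv x"] c by simp
  have c2: "F s (inv s) = F (inv s) (inv x) + F s (inv s \<otimes> inv x)"
    using cocy[of s "inv s" "inv x"] c F1l by simp
  have "inv (x \<otimes> s) = inv s \<otimes> inv x" using c by (simp add: inv_mult_group)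
  then show ?thesis using c1 c2 unfolding e_def by simp
qed

lemma e_sub: "x \<in> carrier G \<Longrightarrow> s \<in> carrier G \<Longrightarrow> e (x \<otimes> s) \<le> e x + e s"
  using e_mult[of x s] Fpos[of x s] Fpos[of "inv s" "inv x"] by simp

lemma defect:
  assumes c: "x \<in> carrier G" "s \<in> carrier G" "t \<in> carrier G"
  shows "e (x \<otimes> s) + e (inv s \<otimes> t) - e (x \<otimes> t) - 2 * F (x \<otimes> s) (inv s \<otimes> t) =
    (F x s - F (inv s) (inv x)) + (F (inv s) t - F (inv t) s) - (F x t - F (inv t) (inv x))"
proof -
  have c7: "F x s + F (x \<otimes> s) (inv s \<otimes> t) = F s (inv s \<otimes> t) + F x t"
    using cocy[of x s "inv s \<otimes> t"] c by simp
  have c8: "e s = F (inv s) t + F s (inv s \<otimes> t)"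
    using cocy[of s "inv s" t] c F1l unfolding e_def by simp
  have eh: "e (inv s \<otimes> t) = e (inv s) + e t - F (inv s) t - F (inv t) s"
    using e_mult[of "inv s" t] c by simp
  have eg: "e (x \<otimes> s) = e x + e s - F x s - F (inv s) (inv x)" using e_mult c by simp
  have egh: "e (x \<otimes> t) = e x + e t - F x t - F (inv t) (inv x)" using e_mult c by simp
  show ?thesis using eh eg egh c7 c8 e_inv[of s] c by linarith
qed

lemma F_short: "z \<in> carrier G \<Longrightarrow> k \<in> carrier G \<Longrightarrow> F z k \<le> e k"
  using cocy[of z k "inv k"] Fpos[of "z \<otimes> k" "inv k"] F1r[of z] unfolding e_def by simp

lemma near_split:
  assumes c: "u \<in> carrier G" "k \<in> carrier G" "a \<in> carrier G"
    and sp: "F (u \<otimes> k) (inv (u \<otimes> k) \<otimes> a) = 0"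
  shows "F u (inv u \<otimes> a) \<le> e k"
proof -
  have "F u k + F (u \<otimes> k) (inv k \<otimes> (inv u \<otimes> a)) = F k (inv k \<otimes> (inv u \<otimes> a)) + F u (k \<otimes> (inv k \<otimes> (inv u \<otimes> a)))"
    using cocy[of u k "inv k \<otimes> (inv u \<otimes> a)"] c by simp
  moreover have "inv (u \<otimes> k) \<otimes> a = inv k \<otimes> (inv u \<otimes> a)" using c by (simp add: inv_mult_group m_assoc)
  ultimately show ?thesis using sp F_short[of u k] Fpos[of k "inv k \<otimes> (inv u \<otimes> a)"] c by simp
qed

end


lemma eval_word_Nil [simp]: "eval_word E ev [] = \<one>\<^bsub>E\<^esub>" by (simp add: eval_word_def)
lemma eval_word_Cons [simp]: "eval_word E ev (x # w) = ev x \<otimes>\<^bsub>E\<^esub> eval_word E ev w"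
  by (simp add: eval_word_def)

lemma eval_word_carr: "monoid E \<Longrightarrow> (\<forall>x\<in>set w. ev x \<in> carrier E) \<Longrightarrow> eval_word E ev w \<in> carrier E"
  by (induction w) (auto simp: monoid.m_closed)

lemma eval_word_append: "monoid E \<Longrightarrow> (\<forall>x\<in>set u. ev x \<in> carrier E) \<Longrightarrow> (\<forall>x\<in>set v. ev x \<in> carrier E) \<Longrightarrow>
   eval_word E ev (u @ v) = eval_word E ev u \<otimes>\<^bsub>E\<^esub> eval_word E ev v"
  by (induction u) (auto simp: monoid.m_assoc eval_word_carr)

lemma eval_word_hom: "group_hom E G \<pi> \<Longrightarrow> (\<forall>x\<in>set w. ev x \<in> carrier E) \<Longrightarrow>
   \<pi> (eval_word E ev w) = eval_word G (\<pi> \<circ> ev) w"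
proof (induction w)
  case Nil then show ?case by (simp add: group_hom.hom_one)
next
  case (Cons a w)
  have "eval_word E ev w \<in> carrier E"
    using Cons eval_word_carr[where E=E and ev=ev and w=w] group.is_monoid group_hom.axioms(1) by auto
  then show ?case using Cons by (simp add: group_hom.hom_mult)
qed

locale mc =
  fixes G :: "('g,'n) monoid_scheme" and E :: "('e,'m) monoid_scheme"
    and \<iota> :: "int \<Rightarrow> 'e" and \<pi> :: "'e \<Rightarrow> 'g"
    and Xa :: "'x set" and ev :: "'x \<Rightarrow> 'e" and C :: int and \<rho> :: "'g \<Rightarrow> 'e"
  assumes ext: "central_extension E G \<iota> \<pi>"
    and ev: "ev \<in> Xa \<rightarrow> carrier E"
    and rho_max: "\<forall>g\<in>carrier G. is_fibre_max E \<iota> (\<rho> g) (cost_set E \<iota> \<pi> Xa ev C g)"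
begin

lemma grpE: "group E" and grpG: "group G" and phom: "\<pi> \<in> hom E G"
  and psurj: "\<pi> ` carrier E = carrier G" and ker: "range \<iota> = kernel E G \<pi>"
  using ext by (auto simp: central_extension_def)

sublocale cext E \<iota>
  unfolding cext_def using ext by (auto simp: central_extension_def)

lemma ghom: "group_hom E G \<pi>"
  using grpE grpG phom by (intro group_hom.intro group_hom_axioms.intro)

lemma pi_iota [simp]: "\<pi> (\<iota> n) = \<one>\<^bsub>G\<^esub>"
proof -
  have "\<iota> n \<in> range \<iota>" by simp
  then have "\<iota> n \<in> kernel E G \<pi>" unfolding ker .
  then show ?thesis by (simp add: kernel_def)
qed

lemma ker_iota: "z \<in> carrier E \<Longrightarrow> \<pi> z = \<one>\<^bsub>G\<^esub> \<Longrightarrow> \<exists>n. z = \<iota> n"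
proof -
  assume "z \<in> carrier E" "\<pi> z = \<one>\<^bsub>G\<^esub>"
  then have "z \<in> kernel E G \<pi>" by (simp add: kernel_def)
  then have "z \<in> range \<iota>" unfolding ker .
  then show ?thesis by blast
qed

lemma iota_inj: "\<iota> m = \<iota> n \<Longrightarrow> m = n" using injD[OF iinj] .

definition val where "val w = eval_word E ev w \<otimes>\<^bsub>E\<^esub> \<iota> (- C * int (length w))"

lemma evc: "w \<in> lists Xa \<Longrightarrow> \<forall>x\<in>set w. ev x \<in> carrier E"
proof
  fix x assume "w \<in> lists Xa" "x \<in> set w"
  then have "x \<in> Xa" by (simp add: in_lists_conv_set)
  then show "ev x \<in> carrier E" using ev by (rule funcset_mem[rotated])
qed

lemma eval_carr: "w \<in> lists Xa \<Longrightarrow> eval_word E ev w \<in> carrier E"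
  by (rule eval_word_carr[OF group.is_monoid[OF grpE] evc])

lemma val_carr: "w \<in> lists Xa \<Longrightarrow> val w \<in> carrier E"
  unfolding val_def by (rule monoid.m_closed[OF group.is_monoid[OF grpE] eval_carr iota_carr])

lemma pi_val: "w \<in> lists Xa \<Longrightarrow> \<pi> (val w) = \<pi> (eval_word E ev w)"
proof -
  assume w: "w \<in> lists Xa"
  have "\<pi> (val w) = \<pi> (eval_word E ev w) \<otimes>\<^bsub>G\<^esub> \<pi> (\<iota> (- C * int (length w)))"
    unfolding val_def using eval_carr[OF w] by (rule hom_mult[OF phom]) simp
  moreover have "\<pi> (eval_word E ev w) \<in> carrier G" using eval_carr[OF w] hom_in_carrier[OF phom] by blast
  ultimately show ?thesis using monoid.r_one[OF group.is_monoid[OF grpG]] by simp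
qed

lemma val_append: "u \<in> lists Xa \<Longrightarrow> v \<in> lists Xa \<Longrightarrow> val (u @ v) = val u \<otimes>\<^bsub>E\<^esub> val v"
proof -
  interpret group E by (rule grpE)
  assume u: "u \<in> lists Xa" and v: "v \<in> lists Xa"
  have "eval_word E ev (u @ v) = eval_word E ev u \<otimes>\<^bsub>E\<^esub> eval_word E ev v"
    using eval_word_append[OF group.is_monoid[OF grpE] evc[OF u] evc[OF v]] .
  moreover have "\<iota> (- C * int (length (u @ v))) = \<iota> (- C * int (length u)) \<otimes>\<^bsub>E\<^esub> \<iota> (- C * int (length v))"
    using iota_add[symmetric] by (simp add: algebra_simps)
  moreover have "eval_word E ev v \<otimes>\<^bsub>E\<^esub> \<iota> (- C * int (length u)) = \<iota> (- C * int (length u)) \<otimes>\<^bsub>E\<^esub> eval_word E ev v"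
    using icent eval_carr[OF v] by simp
  ultimately show ?thesis unfolding val_def using eval_carr[OF u] eval_carr[OF v]
    by (simp add: m_assoc) (simp add: m_assoc[symmetric])
qed

lemma cost_set_iff: "z \<in> cost_set E \<iota> \<pi> Xa ev C g \<longleftrightarrow> (\<exists>w. w \<in> lists Xa \<and> \<pi> (eval_word E ev w) = g \<and> z = val w)"
  unfolding cost_set_def val_def by auto

lemma rho_in: "g \<in> carrier G \<Longrightarrow> \<rho> g \<in> cost_set E \<iota> \<pi> Xa ev C g"
  using rho_max by (auto simp: is_fibre_max_def)

lemma rho_word: "g \<in> carrier G \<Longrightarrow> \<exists>w. w \<in> lists Xa \<and> \<pi> (eval_word E ev w) = g \<and> \<rho> g = val w"
  using rho_in cost_set_iff by blast

lemma rho_carr: "g \<in> carrier G \<Longrightarrow> \<rho> g \<in> carrier E"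
  using rho_word val_carr by metis

lemma pi_rho: "g \<in> carrier G \<Longrightarrow> \<pi> (\<rho> g) = g"
  using rho_word pi_val by metis

lemma rho_ge: "g \<in> carrier G \<Longrightarrow> w \<in> lists Xa \<Longrightarrow> \<pi> (eval_word E ev w) = g \<Longrightarrow>
   \<exists>n\<ge>0. \<rho> g = val w \<otimes>\<^bsub>E\<^esub> \<iota> n"
proof -
  interpret group E by (rule grpE)
  assume g: "g \<in> carrier G" and w: "w \<in> lists Xa" and pw: "\<pi> (eval_word E ev w) = g"
  have "val w \<in> cost_set E \<iota> \<pi> Xa ev C g" using w pw by (auto simp: cost_set_iff)
  then have "fibre_le E \<iota> (val w) (\<rho> g)" using rho_max g by (auto simp: is_fibre_max_def)
  then obtain n where n: "n \<ge> 0" "\<rho> g \<otimes>\<^bsub>E\<^esub> inv\<^bsub>E\<^esub> (val w) = \<iota> n" by (auto simp: fibre_le_def)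
  have "\<rho> g = \<iota> n \<otimes>\<^bsub>E\<^esub> val w" using n rho_carr[OF g] val_carr[OF w]
    using inv_solve_right'[of "\<iota> n" "\<rho> g" "val w"] by simp
  then show ?thesis using n icent val_carr[OF w] by auto
qed

definition F where "F g h = (THE n. \<rho> (g \<otimes>\<^bsub>G\<^esub> h) = \<rho> g \<otimes>\<^bsub>E\<^esub> \<rho> h \<otimes>\<^bsub>E\<^esub> \<iota> n)"

lemma G_mult_carr: "g \<in> carrier G \<Longrightarrow> h \<in> carrier G \<Longrightarrow> g \<otimes>\<^bsub>G\<^esub> h \<in> carrier G"
  by (rule monoid.m_closed[OF group.is_monoid[OF grpG]])

lemma F_eq: "g \<in> carrier G \<Longrightarrow> h \<in> carrier G \<Longrightarrow> \<rho> (g \<otimes>\<^bsub>G\<^esub> h) = \<rho> g \<otimes>\<^bsub>E\<^esub> \<rho> h \<otimes>\<^bsub>E\<^esub> \<iota> (F g h)"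
proof -
  interpret group E by (rule grpE)
  assume g: "g \<in> carrier G" and h: "h \<in> carrier G"
  have ghc: "g \<otimes>\<^bsub>G\<^esub> h \<in> carrier G" using g h by (rule G_mult_carr)
  have rc: "\<rho> g \<in> carrier E" "\<rho> h \<in> carrier E" "\<rho> (g \<otimes>\<^bsub>G\<^esub> h) \<in> carrier E"
    using rho_carr g h ghc by auto
  define z where "z = inv\<^bsub>E\<^esub> (\<rho> g \<otimes>\<^bsub>E\<^esub> \<rho> h) \<otimes>\<^bsub>E\<^esub> \<rho> (g \<otimes>\<^bsub>G\<^esub> h)"
  have zc: "z \<in> carrier E" using rc by (simp add: z_def)
  have "\<pi> z = inv\<^bsub>G\<^esub> (\<pi> (\<rho> g) \<otimes>\<^bsub>G\<^esub> \<pi> (\<rho> h)) \<otimes>\<^bsub>G\<^esub> \<pi> (\<rho> (g \<otimes>\<^bsub>G\<^esub> h))"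
    unfolding z_def using rc group_hom.hom_inv[OF ghom] hom_mult[OF phom] by simp
  also have "\<dots> = \<one>\<^bsub>G\<^esub>" using pi_rho g h ghc group.l_inv[OF grpG] by simp
  finally obtain n where n: "z = \<iota> n" using ker_iota zc by blast
  have eq: "\<rho> (g \<otimes>\<^bsub>G\<^esub> h) = \<rho> g \<otimes>\<^bsub>E\<^esub> \<rho> h \<otimes>\<^bsub>E\<^esub> \<iota> n"
    using n rc inv_solve_left'[of "\<iota> n" "\<rho> g \<otimes>\<^bsub>E\<^esub> \<rho> h" "\<rho> (g \<otimes>\<^bsub>G\<^esub> h)"] unfolding z_def by simp
  have "m = n" if "\<rho> (g \<otimes>\<^bsub>G\<^esub> h) = \<rho> g \<otimes>\<^bsub>E\<^esub> \<rho> h \<otimes>\<^bsub>E\<^esub> \<iota> m" for m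
  proof -
    have "\<rho> g \<otimes>\<^bsub>E\<^esub> \<rho> h \<otimes>\<^bsub>E\<^esub> \<iota> m = \<rho> g \<otimes>\<^bsub>E\<^esub> \<rho> h \<otimes>\<^bsub>E\<^esub> \<iota> n" using that eq by simp
    then have "\<iota> m = \<iota> n" using rc l_cancel[of "\<rho> g \<otimes>\<^bsub>E\<^esub> \<rho> h" "\<iota> m" "\<iota> n"] by simp
    then show ?thesis by (rule iota_inj)
  qed
  then have "F g h = n" unfolding F_def using eq by (intro the_equality) auto
  then show ?thesis using eq by simp
qed

lemma cen_mult: "a \<in> carrier E \<Longrightarrow> b \<in> carrier E \<Longrightarrow>
  (a \<otimes>\<^bsub>E\<^esub> \<iota> m) \<otimes>\<^bsub>E\<^esub> (b \<otimes>\<^bsub>E\<^esub> \<iota> n) = (a \<otimes>\<^bsub>E\<^esub> b) \<otimes>\<^bsub>E\<^esub> \<iota> (m + n)"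
proof -
  interpret group E by (rule grpE)
  assume a: "a \<in> carrier E" and b: "b \<in> carrier E"
  have "(a \<otimes>\<^bsub>E\<^esub> \<iota> m) \<otimes>\<^bsub>E\<^esub> (b \<otimes>\<^bsub>E\<^esub> \<iota> n) = a \<otimes>\<^bsub>E\<^esub> ((\<iota> m \<otimes>\<^bsub>E\<^esub> b) \<otimes>\<^bsub>E\<^esub> \<iota> n)"
    using a b by (simp add: m_assoc)
  also have "\<dots> = a \<otimes>\<^bsub>E\<^esub> ((b \<otimes>\<^bsub>E\<^esub> \<iota> m) \<otimes>\<^bsub>E\<^esub> \<iota> n)" using icent b by simp
  also have "\<dots> = (a \<otimes>\<^bsub>E\<^esub> b) \<otimes>\<^bsub>E\<^esub> (\<iota> m \<otimes>\<^bsub>E\<^esub> \<iota> n)" using a b by (simp add: m_assoc)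
  finally show ?thesis by (simp add: iota_add)
qed

lemma cen_mult1: "a \<in> carrier E \<Longrightarrow> (a \<otimes>\<^bsub>E\<^esub> \<iota> m) \<otimes>\<^bsub>E\<^esub> \<iota> n = a \<otimes>\<^bsub>E\<^esub> \<iota> (m + n)"
  by (simp add: iota_add group.is_monoid[OF grpE] monoid.m_assoc)

lemma uniq: "a \<in> carrier E \<Longrightarrow> a \<otimes>\<^bsub>E\<^esub> \<iota> m = a \<otimes>\<^bsub>E\<^esub> \<iota> n \<Longrightarrow> m = n"
proof -
  interpret group E by (rule grpE)
  assume "a \<in> carrier E" "a \<otimes>\<^bsub>E\<^esub> \<iota> m = a \<otimes>\<^bsub>E\<^esub> \<iota> n"
  then have "\<iota> m = \<iota> n" using l_cancel[of a "\<iota> m" "\<iota> n"] by simp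
  then show ?thesis by (rule iota_inj)
qed

lemma uniq0: "a \<in> carrier E \<Longrightarrow> a = a \<otimes>\<^bsub>E\<^esub> \<iota> m \<Longrightarrow> m = 0"
  using uniq[of a 0 m] by (simp add: group.is_monoid[OF grpE])

lemma eval_append': "u \<in> lists Xa \<Longrightarrow> v \<in> lists Xa \<Longrightarrow>
   eval_word E ev (u @ v) = eval_word E ev u \<otimes>\<^bsub>E\<^esub> eval_word E ev v"
  using eval_word_append[OF group.is_monoid[OF grpE] evc evc] by blast

lemma F_pos: "g \<in> carrier G \<Longrightarrow> h \<in> carrier G \<Longrightarrow> F g h \<ge> 0"
proof -
  assume g: "g \<in> carrier G" and h: "h \<in> carrier G"
  obtain w1 where w1: "w1 \<in> lists Xa" "\<pi> (eval_word E ev w1) = g" "\<rho> g = val w1" using rho_word g by blast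
  obtain w2 where w2: "w2 \<in> lists Xa" "\<pi> (eval_word E ev w2) = h" "\<rho> h = val w2" using rho_word h by blast
  have "\<pi> (eval_word E ev (w1 @ w2)) = g \<otimes>\<^bsub>G\<^esub> h"
    using w1 w2 eval_append' eval_carr hom_mult[OF phom] by simp
  moreover have "w1 @ w2 \<in> lists Xa" using w1 w2 by simp
  ultimately obtain n where n: "n \<ge> 0" "\<rho> (g \<otimes>\<^bsub>G\<^esub> h) = val (w1 @ w2) \<otimes>\<^bsub>E\<^esub> \<iota> n"
    using rho_ge G_mult_carr g h by blast
  then have "\<rho> g \<otimes>\<^bsub>E\<^esub> \<rho> h \<otimes>\<^bsub>E\<^esub> \<iota> (F g h) = \<rho> g \<otimes>\<^bsub>E\<^esub> \<rho> h \<otimes>\<^bsub>E\<^esub> \<iota> n"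
    using F_eq[OF g h] val_append w1 w2 by simp
  then have "F g h = n" using uniq rho_carr g h by (meson group.subgroupE(4) grpE group.subgroup_self)
  then show ?thesis using n by simp
qed

lemma rho_one: "\<rho> \<one>\<^bsub>G\<^esub> = \<one>\<^bsub>E\<^esub>"
proof -
  interpret group E by (rule grpE)
  have oc: "\<one>\<^bsub>G\<^esub> \<in> carrier G" by (simp add: group.is_monoid[OF grpG] monoid.one_closed)
  have r1: "\<rho> \<one>\<^bsub>G\<^esub> \<in> carrier E" using rho_carr oc by blast
  have "\<rho> \<one>\<^bsub>G\<^esub> = \<rho> \<one>\<^bsub>G\<^esub> \<otimes>\<^bsub>E\<^esub> \<rho> \<one>\<^bsub>G\<^esub> \<otimes>\<^bsub>E\<^esub> \<iota> (F \<one>\<^bsub>G\<^esub> \<one>\<^bsub>G\<^esub>)"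
    using F_eq[OF oc oc] by (simp add: group.is_monoid[OF grpG] monoid.l_one[OF group.is_monoid[OF grpG]])
  then have "\<rho> \<one>\<^bsub>G\<^esub> \<otimes>\<^bsub>E\<^esub> \<one>\<^bsub>E\<^esub> = \<rho> \<one>\<^bsub>G\<^esub> \<otimes>\<^bsub>E\<^esub> (\<rho> \<one>\<^bsub>G\<^esub> \<otimes>\<^bsub>E\<^esub> \<iota> (F \<one>\<^bsub>G\<^esub> \<one>\<^bsub>G\<^esub>))"
    using r1 by (simp add: m_assoc)
  then have e1: "\<rho> \<one>\<^bsub>G\<^esub> \<otimes>\<^bsub>E\<^esub> \<iota> (F \<one>\<^bsub>G\<^esub> \<one>\<^bsub>G\<^esub>) = \<one>\<^bsub>E\<^esub>"
    using r1 l_cancel[of "\<rho> \<one>\<^bsub>G\<^esub>"] by (metis iota_carr m_closed one_closed)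
  have "\<pi> (eval_word E ev []) = \<one>\<^bsub>G\<^esub>" using group_hom.hom_one[OF ghom] by simp
  then obtain n where n: "n \<ge> 0" "\<rho> \<one>\<^bsub>G\<^esub> = val [] \<otimes>\<^bsub>E\<^esub> \<iota> n" using rho_ge oc by blast
  then have r1n: "\<rho> \<one>\<^bsub>G\<^esub> = \<iota> n" by (simp add: val_def)
  then have "\<iota> (n + F \<one>\<^bsub>G\<^esub> \<one>\<^bsub>G\<^esub>) = \<iota> 0" using e1 iota_add by simp
  then have "n + F \<one>\<^bsub>G\<^esub> \<one>\<^bsub>G\<^esub> = 0" by (rule iota_inj)
  then have "n = 0" using n F_pos[OF oc oc] by simp
  then show ?thesis using r1n by simp
qed

lemma F_1r: "x \<in> carrier G \<Longrightarrow> F x \<one>\<^bsub>G\<^esub> = 0"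
proof -
  assume x: "x \<in> carrier G"
  have oc: "\<one>\<^bsub>G\<^esub> \<in> carrier G" by (simp add: group.is_monoid[OF grpG] monoid.one_closed)
  have "\<rho> x = \<rho> x \<otimes>\<^bsub>E\<^esub> \<iota> (F x \<one>\<^bsub>G\<^esub>)"
    using F_eq[OF x oc] x rho_carr[OF x] by (simp add: rho_one monoid.r_one[OF group.is_monoid[OF grpG]] group.is_monoid[OF grpE])
  then show ?thesis using uniq0 rho_carr[OF x] by blast
qed

lemma F_1l: "x \<in> carrier G \<Longrightarrow> F \<one>\<^bsub>G\<^esub> x = 0"
proof -
  assume x: "x \<in> carrier G"
  have oc: "\<one>\<^bsub>G\<^esub> \<in> carrier G" by (simp add: group.is_monoid[OF grpG] monoid.one_closed)
  have "\<rho> x = \<rho> x \<otimes>\<^bsub>E\<^esub> \<iota> (F \<one>\<^bsub>G\<^esub> x)"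
    using F_eq[OF oc x] x rho_carr[OF x] by (simp add: rho_one monoid.l_one[OF group.is_monoid[OF grpG]] group.is_monoid[OF grpE])
  then show ?thesis using uniq0 rho_carr[OF x] by blast
qed

lemma F_cocycle: "x \<in> carrier G \<Longrightarrow> y \<in> carrier G \<Longrightarrow> z \<in> carrier G \<Longrightarrow>
   F x y + F (x \<otimes>\<^bsub>G\<^esub> y) z = F y z + F x (y \<otimes>\<^bsub>G\<^esub> z)"
proof -
  interpret group E by (rule grpE)
  assume x: "x \<in> carrier G" and y: "y \<in> carrier G" and z: "z \<in> carrier G"
  have xy: "x \<otimes>\<^bsub>G\<^esub> y \<in> carrier G" and yz: "y \<otimes>\<^bsub>G\<^esub> z \<in> carrier G" using x y z G_mult_carr by auto
  have rc: "\<rho> x \<in> carrier E" "\<rho> y \<in> carrier E" "\<rho> z \<in> carrier E" using rho_carr x y z by auto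
  have "\<rho> ((x \<otimes>\<^bsub>G\<^esub> y) \<otimes>\<^bsub>G\<^esub> z) = (\<rho> x \<otimes>\<^bsub>E\<^esub> \<rho> y \<otimes>\<^bsub>E\<^esub> \<iota> (F x y)) \<otimes>\<^bsub>E\<^esub> (\<rho> z \<otimes>\<^bsub>E\<^esub> \<iota> (F (x \<otimes>\<^bsub>G\<^esub> y) z))"
    using F_eq[OF xy z] F_eq[OF x y] rc by (simp add: m_assoc)
  also have "\<dots> = (\<rho> x \<otimes>\<^bsub>E\<^esub> \<rho> y \<otimes>\<^bsub>E\<^esub> \<rho> z) \<otimes>\<^bsub>E\<^esub> \<iota> (F x y + F (x \<otimes>\<^bsub>G\<^esub> y) z)"
    using cen_mult rc by simp
  finally have A: "\<rho> ((x \<otimes>\<^bsub>G\<^esub> y) \<otimes>\<^bsub>G\<^esub> z) = (\<rho> x \<otimes>\<^bsub>E\<^esub> \<rho> y \<otimes>\<^bsub>E\<^esub> \<rho> z) \<otimes>\<^bsub>E\<^esub> \<iota> (F x y + F (x \<otimes>\<^bsub>G\<^esub> y) z)" .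
  have "\<rho> (x \<otimes>\<^bsub>G\<^esub> (y \<otimes>\<^bsub>G\<^esub> z)) = \<rho> x \<otimes>\<^bsub>E\<^esub> ((\<rho> y \<otimes>\<^bsub>E\<^esub> \<rho> z) \<otimes>\<^bsub>E\<^esub> \<iota> (F y z)) \<otimes>\<^bsub>E\<^esub> \<iota> (F x (y \<otimes>\<^bsub>G\<^esub> z))"
    using F_eq[OF x yz] F_eq[OF y z] by simp
  also have "\<dots> = (\<rho> x \<otimes>\<^bsub>E\<^esub> \<rho> y \<otimes>\<^bsub>E\<^esub> \<rho> z) \<otimes>\<^bsub>E\<^esub> \<iota> (F y z + F x (y \<otimes>\<^bsub>G\<^esub> z))"
    using rc by (simp add: m_assoc iota_add)
  finally have B: "\<rho> (x \<otimes>\<^bsub>G\<^esub> (y \<otimes>\<^bsub>G\<^esub> z)) = (\<rho> x \<otimes>\<^bsub>E\<^esub> \<rho> y \<otimes>\<^bsub>E\<^esub> \<rho> z) \<otimes>\<^bsub>E\<^esub> \<iota> (F y z + F x (y \<otimes>\<^bsub>G\<^esub> z))" .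
  have "(x \<otimes>\<^bsub>G\<^esub> y) \<otimes>\<^bsub>G\<^esub> z = x \<otimes>\<^bsub>G\<^esub> (y \<otimes>\<^bsub>G\<^esub> z)"
    using x y z by (simp add: monoid.m_assoc[OF group.is_monoid[OF grpG]])
  then show ?thesis using A B uniq rc by (metis m_closed)
qed

lemma split_zero:
  assumes w: "w \<in> lists Xa" and a: "a \<in> carrier G" and pw: "\<pi> (eval_word E ev w) = a"
    and vw: "val w = \<rho> a" and i: "i \<le> length w"
  shows "F (\<pi> (eval_word E ev (take i w))) (inv\<^bsub>G\<^esub> (\<pi> (eval_word E ev (take i w))) \<otimes>\<^bsub>G\<^esub> a) = 0"
proof -
  interpret group E by (rule grpE)
  define u where "u = take i w"
  define v where "v = drop i w"
  have uv: "u \<in> lists Xa" "v \<in> lists Xa" "w = u @ v" using w by (auto simp: u_def v_def in_lists_conv_set dest: in_set_takeD in_set_dropD)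
  define p where "p = \<pi> (eval_word E ev u)"
  have pc: "p \<in> carrier G" unfolding p_def using eval_carr[OF uv(1)] hom_in_carrier[OF phom] by blast
  have qc: "\<pi> (eval_word E ev v) \<in> carrier G" using eval_carr[OF uv(2)] hom_in_carrier[OF phom] by blast
  have ap: "a = p \<otimes>\<^bsub>G\<^esub> \<pi> (eval_word E ev v)"
    using pw uv eval_append' eval_carr hom_mult[OF phom] by (simp add: p_def)
  have q: "\<pi> (eval_word E ev v) = inv\<^bsub>G\<^esub> p \<otimes>\<^bsub>G\<^esub> a"
    using ap pc qc group.inv_solve_left[OF grpG] a by metis
  have q2: "inv\<^bsub>G\<^esub> p \<otimes>\<^bsub>G\<^esub> a \<in> carrier G" using q qc by simp
  obtain m1 where m1: "m1 \<ge> 0" "\<rho> p = val u \<otimes>\<^bsub>E\<^esub> \<iota> m1" using rho_ge[OF pc uv(1)] p_def by blast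
  obtain m2 where m2: "m2 \<ge> 0" "\<rho> (inv\<^bsub>G\<^esub> p \<otimes>\<^bsub>G\<^esub> a) = val v \<otimes>\<^bsub>E\<^esub> \<iota> m2"
    using rho_ge[OF q2 uv(2)] q by blast
  have "\<rho> a = \<rho> (p \<otimes>\<^bsub>G\<^esub> (inv\<^bsub>G\<^esub> p \<otimes>\<^bsub>G\<^esub> a))" using ap q by simp
  also have "\<dots> = \<rho> p \<otimes>\<^bsub>E\<^esub> \<rho> (inv\<^bsub>G\<^esub> p \<otimes>\<^bsub>G\<^esub> a) \<otimes>\<^bsub>E\<^esub> \<iota> (F p (inv\<^bsub>G\<^esub> p \<otimes>\<^bsub>G\<^esub> a))"
    by (rule F_eq[OF pc q2])
  also have "\<dots> = ((val u \<otimes>\<^bsub>E\<^esub> \<iota> m1) \<otimes>\<^bsub>E\<^esub> (val v \<otimes>\<^bsub>E\<^esub> \<iota> m2)) \<otimes>\<^bsub>E\<^esub> \<iota> (F p (inv\<^bsub>G\<^esub> p \<otimes>\<^bsub>G\<^esub> a))"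
    using m1(2) m2(2) by simp
  also have "\<dots> = ((val u \<otimes>\<^bsub>E\<^esub> val v) \<otimes>\<^bsub>E\<^esub> \<iota> (m1 + m2)) \<otimes>\<^bsub>E\<^esub> \<iota> (F p (inv\<^bsub>G\<^esub> p \<otimes>\<^bsub>G\<^esub> a))"
    using cen_mult val_carr uv by simp
  also have "\<dots> = (val u \<otimes>\<^bsub>E\<^esub> val v) \<otimes>\<^bsub>E\<^esub> \<iota> (m1 + m2 + F p (inv\<^bsub>G\<^esub> p \<otimes>\<^bsub>G\<^esub> a))"
    using cen_mult1 val_carr uv by simp
  also have "\<dots> = \<rho> a \<otimes>\<^bsub>E\<^esub> \<iota> (m1 + m2 + F p (inv\<^bsub>G\<^esub> p \<otimes>\<^bsub>G\<^esub> a))"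
    using vw val_append uv by simp
  finally have "m1 + m2 + F p (inv\<^bsub>G\<^esub> p \<otimes>\<^bsub>G\<^esub> a) = 0" using uniq0 rho_carr a by blast
  then show ?thesis using m1 m2 F_pos[OF pc q2] by (simp add: p_def u_def)
qed

end


lemma generate_hom_image:
  assumes "group_hom H G f" "Y \<subseteq> carrier H" "z \<in> generate H Y"
  shows "f z \<in> generate G (f ` Y)"
  using assms(3)
proof (induction rule: generate.induct)
  case one then show ?case using group_hom.hom_one[OF assms(1)] generate.one by metis
next
  case (incl h) then show ?case by (auto intro: generate.incl)
next
  fix h assume hX: "h \<in> Y"
  then have "f (inv\<^bsub>H\<^esub> h) = inv\<^bsub>G\<^esub> (f h)" using group_hom.hom_inv[OF assms(1)] assms(2) by auto
  then show "f (inv\<^bsub>H\<^esub> h) \<in> generate G (f ` Y)" using hX by (auto intro: generate.inv)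
next
  case (eng h1 h2)
  have "generate H Y \<subseteq> carrier H" using group.generate_incl[OF group_hom.axioms(1)[OF assms(1)] assms(2)] .
  then have "f (h1 \<otimes>\<^bsub>H\<^esub> h2) = f h1 \<otimes>\<^bsub>G\<^esub> f h2" using eng group_hom.hom_mult[OF assms(1)] by auto
  then show ?case using eng by (auto intro: generate.eng)
qed

context group begin
lemma gid1: "x \<in> carrier G \<Longrightarrow> g \<in> carrier G \<Longrightarrow> inv (inv x \<otimes> g) = inv g \<otimes> x"
  by (simp add: inv_mult_group)
lemma gid2: "x \<in> carrier G \<Longrightarrow> g \<in> carrier G \<Longrightarrow> inv (inv g \<otimes> x) \<otimes> inv g = inv x"
  by (simp add: inv_mult_group m_assoc)
lemma gid3: "x \<in> carrier G \<Longrightarrow> g \<in> carrier G \<Longrightarrow> h \<in> carrier G \<Longrightarrow> inv (inv g \<otimes> x) \<otimes> h = inv x \<otimes> (g \<otimes> h)"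
  by (simp add: inv_mult_group m_assoc)
lemma gid4: "x \<in> carrier G \<Longrightarrow> g \<in> carrier G \<Longrightarrow> h \<in> carrier G \<Longrightarrow> inv (inv (g \<otimes> h) \<otimes> x) \<otimes> inv h = inv x \<otimes> g"
  by (simp add: inv_mult_group m_assoc)
lemma gid5: "x \<in> carrier G \<Longrightarrow> g \<in> carrier G \<Longrightarrow> h \<in> carrier G \<Longrightarrow> inv (inv x \<otimes> (g \<otimes> h)) = inv (g \<otimes> h) \<otimes> x"
  by (simp add: inv_mult_group)
lemma gid6: "x \<in> carrier G \<Longrightarrow> g \<in> carrier G \<Longrightarrow> h \<in> carrier G \<Longrightarrow> x \<otimes> (inv x \<otimes> g) = g"
  by simp
lemma gid7: "x \<in> carrier G \<Longrightarrow> g \<in> carrier G \<Longrightarrow> h \<in> carrier G \<Longrightarrow> inv (inv x \<otimes> g) \<otimes> (inv x \<otimes> (g \<otimes> h)) = h"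
  by (simp add: inv_mult_group m_assoc)
end


locale mh = mc G E \<iota> \<pi> Xa ev C \<rho> + hypg G S \<delta>
  for G :: "('g,'n) monoid_scheme" and E :: "('e,'m) monoid_scheme"
    and \<iota> :: "int \<Rightarrow> 'e" and \<pi> :: "'e \<Rightarrow> 'g"
    and Xa :: "'x set" and ev :: "'x \<Rightarrow> 'e" and C :: int and \<rho> :: "'g \<Rightarrow> 'e"
    and S :: "'g set" and \<delta> :: real +
  fixes lam :: real
  assumes finS: "finite S" and finX: "finite Xa" and lam_pos: "lam > 0"
    and genE: "generate E (ev ` Xa) = carrier E"
    and qgeo: "\<forall>g\<in>carrier G. \<forall>w\<in>lists Xa.
          \<pi> (eval_word E ev w) = g \<and>
          eval_word E ev w \<otimes>\<^bsub>E\<^esub> \<iota> (- C * int (length w)) = \<rho> g \<longrightarrow>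
          quasigeodesic_word G (\<pi> ` ev ` Xa) (\<pi> \<circ> ev) lam 0 w"
begin

definition T where "T = \<pi> ` ev ` Xa"

lemma T_carr: "T \<subseteq> carrier G"
  unfolding T_def using ev hom_in_carrier[OF phom] by blast

lemma Twgen: "wgen G T"
proof (intro wgen.intro wgen_axioms.intro)
  show "group G" by (rule grpG)
  show "T \<subseteq> carrier G" by (rule T_carr)
  show "generate G T = carrier G"
  proof
    show "generate G T \<subseteq> carrier G" using group.generate_incl[OF grpG T_carr] .
    show "carrier G \<subseteq> generate G T"
    proof
      fix g assume "g \<in> carrier G"
      then obtain z where z: "z \<in> carrier E" "g = \<pi> z" using psurj by auto
      have evX: "ev ` Xa \<subseteq> carrier E" using ev by auto
      have "z \<in> generate E (ev ` Xa)" using z genE by simp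
      then show "g \<in> generate G T" unfolding T_def z(2) using generate_hom_image[OF ghom evX] by blast
    qed
  qed
qed


lemma Swgen: "wgen G S"
  by (intro wgen.intro wgen_axioms.intro is_group A_carr A_gen)

definition KS where "KS = Max (insert 0 ((\<lambda>x. wl (\<pi> (ev x))) ` Xa))"

lemma KS: "x \<in> Xa \<Longrightarrow> wl (\<pi> (ev x)) \<le> KS"
  unfolding KS_def using finX by (intro Max_ge) auto

definition KT where "KT = (SOME K. \<forall>g\<in>carrier G. word_length G T g \<le> K * wl g)"

lemma KT: "g \<in> carrier G \<Longrightarrow> word_length G T g \<le> KT * wl g"
proof -
  have "\<exists>K. \<forall>g\<in>carrier G. word_length G T g \<le> K * wl g"
    using wl_compare[OF Twgen Swgen] finS by blast
  from someI_ex[OF this] show "g \<in> carrier G \<Longrightarrow> word_length G T g \<le> KT * wl g"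
    unfolding KT_def by blast
qed


definition W where "W a = (SOME w. w \<in> lists Xa \<and> \<pi> (eval_word E ev w) = a \<and> \<rho> a = val w)"

lemma W_prop: "a \<in> carrier G \<Longrightarrow> W a \<in> lists Xa \<and> \<pi> (eval_word E ev (W a)) = a \<and> \<rho> a = val (W a)"
proof -
  assume a: "a \<in> carrier G"
  have "\<exists>w. w \<in> lists Xa \<and> \<pi> (eval_word E ev w) = a \<and> \<rho> a = val w" using rho_word[OF a] .
  then show ?thesis unfolding W_def by (rule someI_ex)
qed

definition V where "V a i = \<pi> (eval_word E ev (take i (W a)))"

lemma take_lists: "w \<in> lists Xa \<Longrightarrow> take i w \<in> lists Xa"
  by (auto simp: in_lists_conv_set dest: in_set_takeD)

lemma V_carr: "a \<in> carrier G \<Longrightarrow> V a i \<in> carrier G"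
proof -
  assume a: "a \<in> carrier G"
  then have "W a \<in> lists Xa" using W_prop by blast
  then have "eval_word E ev (take i (W a)) \<in> carrier E" using take_lists eval_carr by blast
  then show ?thesis unfolding V_def by (rule hom_in_carrier[OF phom])
qed

lemma V0: "V a 0 = \<one>\<^bsub>G\<^esub>"
  unfolding V_def using group_hom.hom_one[OF ghom] by simp

lemma Vlen: "a \<in> carrier G \<Longrightarrow> V a (length (W a)) = a"
  unfolding V_def using W_prop by simp

lemma V_Suc: "a \<in> carrier G \<Longrightarrow> l < length (W a) \<Longrightarrow>
   V a (Suc l) = V a l \<otimes>\<^bsub>G\<^esub> \<pi> (ev (W a ! l))"
proof -
  assume a: "a \<in> carrier G" and l: "l < length (W a)"
  have w: "W a \<in> lists Xa" using W_prop a by blast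
  have t: "take (Suc l) (W a) = take l (W a) @ [W a ! l]" using l by (simp add: take_Suc_conv_app_nth)
  have x: "[W a ! l] \<in> lists Xa" using w l by (auto simp: in_lists_conv_set)
  have "eval_word E ev (take (Suc l) (W a)) = eval_word E ev (take l (W a)) \<otimes>\<^bsub>E\<^esub> eval_word E ev [W a ! l]"
    using t eval_append' take_lists[OF w] x by simp
  moreover have "eval_word E ev [W a ! l] = ev (W a ! l)"
    using evc[OF x] by (simp add: group.is_monoid[OF grpE])
  ultimately show ?thesis unfolding V_def
    using hom_mult[OF phom] eval_carr[OF take_lists[OF w]] evc[OF x] by simp
qed

lemma V_jump: "a \<in> carrier G \<Longrightarrow> l < length (W a) \<Longrightarrow> dist (V a l) (V a (Suc l)) \<le> KS"
proof -
  assume a: "a \<in> carrier G" and l: "l < length (W a)"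
  have w: "W a \<in> lists Xa" using W_prop a by blast
  then have x: "W a ! l \<in> Xa" using l by (auto simp: in_lists_conv_set)
  have pc: "\<pi> (ev (W a ! l)) \<in> carrier G" using x ev hom_in_carrier[OF phom] by blast
  have "dist (V a l) (V a (Suc l)) = wl (\<pi> (ev (W a ! l)))"
    unfolding dist_eq V_Suc[OF a l] using V_carr[OF a] pc by simp
  then show ?thesis using KS[OF x] by simp
qed

lemma V_qg: "a \<in> carrier G \<Longrightarrow> l \<le> l' \<Longrightarrow> l' \<le> length (W a) \<Longrightarrow>
   real (l' - l) \<le> (lam * real KT) * real (dist (V a l) (V a l'))"
proof -
  assume a: "a \<in> carrier G" and ll: "l \<le> l'" "l' \<le> length (W a)"
  have w: "W a \<in> lists Xa" "\<pi> (eval_word E ev (W a)) = a" "\<rho> a = val (W a)" using W_prop a by auto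
  have "quasigeodesic_word G T (\<pi> \<circ> ev) lam 0 (W a)"
    using qgeo a w unfolding T_def val_def by auto
  then have q: "real (l' - l) \<le> lam * real (word_dist G T (eval_word G (\<pi> \<circ> ev) (take l (W a))) (eval_word G (\<pi> \<circ> ev) (take l' (W a))))"
    unfolding quasigeodesic_word_def using ll by auto
  have ew: "eval_word G (\<pi> \<circ> ev) (take i (W a)) = V a i" for i
    unfolding V_def using eval_word_hom[OF ghom evc[OF take_lists[OF w(1)]]] by simp
  have "word_dist G T (V a l) (V a l') \<le> KT * wl (inv\<^bsub>G\<^esub> (V a l) \<otimes>\<^bsub>G\<^esub> V a l')"
    unfolding word_dist_def using KT V_carr[OF a] by simp
  then have "real (word_dist G T (V a l) (V a l')) \<le> real KT * real (dist (V a l) (V a l'))"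
    unfolding dist_eq by (metis of_nat_le_iff of_nat_mult)
  then have "lam * real (word_dist G T (V a l) (V a l')) \<le> lam * (real KT * real (dist (V a l) (V a l')))"
    using lam_pos by (intro mult_left_mono) auto
  then show ?thesis using q ew by (simp add: mult.assoc)
qed

definition D0 where "D0 = Dm (real KS) (lam * real KT) \<delta>"

lemma near:
  assumes b: "\<beta> \<in> carrier G" and a: "a \<in> carrier G" and g: "geod \<gamma> \<beta> (\<beta> \<otimes>\<^bsub>G\<^esub> a)"
    and s: "s \<le> dist \<beta> (\<beta> \<otimes>\<^bsub>G\<^esub> a)"
  shows "\<exists>i \<le> length (W a). real (dist (\<gamma> s) (\<beta> \<otimes>\<^bsub>G\<^esub> V a i)) \<le> D0"
proof -
  let ?c = "\<lambda>l. \<beta> \<otimes>\<^bsub>G\<^esub> V a l"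
  have "\<forall>s \<le> dist \<beta> (\<beta> \<otimes>\<^bsub>G\<^esub> a). \<exists>l \<le> length (W a). real (dist (\<gamma> s) (?c l)) \<le> Dm (real KS) (lam * real KT) \<delta>"
  proof (rule morse)
    show "0 \<le> lam * real KT" using lam_pos by simp
    show "\<forall>l \<le> length (W a). ?c l \<in> carrier G" using b V_carr[OF a] by blast
    show "?c 0 = \<beta>" using b V0 r_one by metis
    show "?c (length (W a)) = \<beta> \<otimes>\<^bsub>G\<^esub> a" using Vlen[OF a] by simp
    show "\<forall>l < length (W a). dist (?c l) (?c (Suc l)) \<le> KS"
    proof (intro allI impI)
      fix l assume l: "l < length (W a)"
      have "dist (?c l) (?c (Suc l)) = dist (V a l) (V a (Suc l))"
        by (rule dist_transl[OF b V_carr[OF a] V_carr[OF a]])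
      then show "dist (?c l) (?c (Suc l)) \<le> KS" using V_jump[OF a l] by simp
    qed
    show "\<forall>l l'. l \<le> l' \<longrightarrow> l' \<le> length (W a) \<longrightarrow> real (l' - l) \<le> lam * real KT * real (dist (?c l) (?c l'))"
    proof (intro allI impI)
      fix l l' assume l: "l \<le> l'" "l' \<le> length (W a)"
      have "dist (?c l) (?c l') = dist (V a l) (V a l')"
        by (rule dist_transl[OF b V_carr[OF a] V_carr[OF a]])
      then show "real (l' - l) \<le> lam * real KT * real (dist (?c l) (?c l'))" using V_qg[OF a l] by simp
    qed
    show "geod \<gamma> \<beta> (\<beta> \<otimes>\<^bsub>G\<^esub> a)" by (rule g)
    show "\<beta> \<in> carrier G" "\<beta> \<otimes>\<^bsub>G\<^esub> a \<in> carrier G" using a b by auto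
  qed
  then show ?thesis using s unfolding D0_def by blast
qed


sublocale cc: coc G F
proof (intro coc.intro coc_axioms.intro)
  show "group G" by (rule grpG)
  show "\<And>x y z. x \<in> carrier G \<Longrightarrow> y \<in> carrier G \<Longrightarrow> z \<in> carrier G \<Longrightarrow>
      F x y + F (x \<otimes>\<^bsub>G\<^esub> y) z = F y z + F x (y \<otimes>\<^bsub>G\<^esub> z)" by (rule F_cocycle)
  show "\<And>x y. x \<in> carrier G \<Longrightarrow> y \<in> carrier G \<Longrightarrow> 0 \<le> F x y" by (rule F_pos)
  show "\<And>x. x \<in> carrier G \<Longrightarrow> F x \<one>\<^bsub>G\<^esub> = 0" by (rule F_1r)
  show "\<And>x. x \<in> carrier G \<Longrightarrow> F \<one>\<^bsub>G\<^esub> x = 0" by (rule F_1l)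
qed

definition E0 where "E0 = Max (insert 0 (cc.e ` Lt))"

lemma E0_nonneg: "E0 \<ge> 0"
  unfolding E0_def using finS by (intro Max_ge) (auto simp: Lt_def)

lemma E0_ge: "a \<in> Lt \<Longrightarrow> cc.e a \<le> E0"
  unfolding E0_def using finS by (intro Max_ge) (auto simp: Lt_def)

lemma e_one: "cc.e \<one>\<^bsub>G\<^esub> = 0"
  unfolding cc.e_def using F_1l[of "inv\<^bsub>G\<^esub> \<one>\<^bsub>G\<^esub>"] by simp

lemma e_word: "set ws \<subseteq> Lt \<Longrightarrow> cc.e (wprod G ws) \<le> E0 * int (length ws)"
proof (induction ws)
  case Nil then show ?case using e_one by simp
next
  case (Cons a ws)
  have c: "a \<in> carrier G" "wprod G ws \<in> carrier G" using Cons.prems Lt_carr wprod_carr by auto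
  have "cc.e (wprod G (a # ws)) \<le> cc.e a + cc.e (wprod G ws)" using cc.e_sub c by simp
  also have "\<dots> \<le> E0 + E0 * int (length ws)" using Cons E0_ge by (intro add_mono) auto
  finally show ?case by (simp add: algebra_simps)
qed

lemma e_bound: "k \<in> carrier G \<Longrightarrow> cc.e k \<le> E0 * int (wl k)"
proof -
  assume "k \<in> carrier G"
  then obtain ws where "set ws \<subseteq> Lt" "length ws = wl k" "wprod G ws = k" using wl_word by blast
  then show ?thesis using e_word by metis
qed

lemma term_bound:
  assumes b: "\<beta> \<in> carrier G" and a: "a \<in> carrier G" and x: "x \<in> carrier G"
    and i: "i \<le> length (W a)" and d: "dist x (\<beta> \<otimes>\<^bsub>G\<^esub> V a i) \<le> Rn"
  shows "F (inv\<^bsub>G\<^esub> \<beta> \<otimes>\<^bsub>G\<^esub> x) (inv\<^bsub>G\<^esub> (inv\<^bsub>G\<^esub> \<beta> \<otimes>\<^bsub>G\<^esub> x) \<otimes>\<^bsub>G\<^esub> a) \<le> E0 * int Rn"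
proof -
  define u where "u = inv\<^bsub>G\<^esub> \<beta> \<otimes>\<^bsub>G\<^esub> x"
  define p where "p = V a i"
  define k where "k = inv\<^bsub>G\<^esub> u \<otimes>\<^bsub>G\<^esub> p"
  have uc: "u \<in> carrier G" and pc: "p \<in> carrier G" using b x V_carr[OF a] by (auto simp: u_def p_def)
  have kc: "k \<in> carrier G" using uc pc by (simp add: k_def)
  have pk: "u \<otimes>\<^bsub>G\<^esub> k = p" using uc pc by (simp add: k_def)
  have w: "W a \<in> lists Xa" "\<pi> (eval_word E ev (W a)) = a" "\<rho> a = val (W a)" using W_prop a by auto
  have sp: "F p (inv\<^bsub>G\<^esub> p \<otimes>\<^bsub>G\<^esub> a) = 0"
    using split_zero[OF w(1) a w(2) w(3)[symmetric] i] by (simp add: p_def V_def)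
  have "F u (inv\<^bsub>G\<^esub> u \<otimes>\<^bsub>G\<^esub> a) \<le> cc.e k"
    using cc.near_split[OF uc kc a] sp pk by simp
  also have "\<dots> \<le> E0 * int (wl k)" using e_bound[OF kc] .
  also have "wl k = dist x (\<beta> \<otimes>\<^bsub>G\<^esub> p)"
  proof -
    have "dist x (\<beta> \<otimes>\<^bsub>G\<^esub> p) = dist (\<beta> \<otimes>\<^bsub>G\<^esub> u) (\<beta> \<otimes>\<^bsub>G\<^esub> p)" using b x by (simp add: u_def)
    also have "\<dots> = dist u p" using dist_transl b uc pc by simp
    finally show ?thesis by (simp add: dist_eq k_def)
  qed
  also have "E0 * int (dist x (\<beta> \<otimes>\<^bsub>G\<^esub> p)) \<le> E0 * int Rn" using d E0_nonneg by (simp add: p_def mult_left_mono)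
  finally show ?thesis by (simp add: u_def)
qed


definition Rn where "Rn = nat \<lceil>D0 + 4 * \<delta> + 2\<rceil>"

lemma le_Rn: "real n \<le> D0 + 4 * \<delta> + 2 \<Longrightarrow> n \<le> Rn"
proof -
  assume h: "real n \<le> D0 + 4 * \<delta> + 2"
  have "\<lceil>real n\<rceil> \<le> \<lceil>D0 + 4 * \<delta> + 2\<rceil>" by (rule ceiling_mono[OF h])
  then have "int n \<le> \<lceil>D0 + 4 * \<delta> + 2\<rceil>" by (simp only: ceiling_of_nat)
  then show ?thesis unfolding Rn_def by (metis nat_int nat_mono)
qed

lemma main_bound:
  assumes g: "g \<in> carrier G" and h: "h \<in> carrier G"
  shows "\<bar>cc.e g + cc.e h - cc.e (g \<otimes>\<^bsub>G\<^esub> h) - 2 * F g h\<bar> \<le> 3 * (E0 * int Rn)"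
proof -
  have gh: "g \<otimes>\<^bsub>G\<^esub> h \<in> carrier G" using g h by simp
  have oc: "\<one>\<^bsub>G\<^esub> \<in> carrier G" by simp
  obtain \<alpha> where ga: "geod \<alpha> \<one>\<^bsub>G\<^esub> g" using geod_exists oc g by blast
  obtain \<beta> where gb: "geod \<beta> g (g \<otimes>\<^bsub>G\<^esub> h)" using geod_exists g gh by blast
  obtain \<gamma> where gc: "geod \<gamma> \<one>\<^bsub>G\<^esub> (g \<otimes>\<^bsub>G\<^esub> h)" using geod_exists oc gh by blast
  obtain t j where tj: "t \<le> dist \<one>\<^bsub>G\<^esub> g" "t \<le> dist \<one>\<^bsub>G\<^esub> (g \<otimes>\<^bsub>G\<^esub> h)" "j \<le> dist g (g \<otimes>\<^bsub>G\<^esub> h)"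
     "real (dist (\<alpha> t) (\<gamma> t)) \<le> 4 * \<delta>" "real (dist (\<alpha> t) (\<beta> j)) \<le> 4 * \<delta> + 2"
    using tripod[OF g h ga gb gc] by blast
  define x where "x = \<alpha> t"
  have xc: "x \<in> carrier G" using geod_carr[OF ga tj(1)] by (simp add: x_def)
  have vc: "\<gamma> t \<in> carrier G" using geod_carr[OF gc tj(2)] .
  have wc: "\<beta> j \<in> carrier G" using geod_carr[OF gb tj(3)] .
  have D0nn: "D0 \<ge> 0" using delta_nonneg lam_pos
    unfolding D0_def Dm_def by (intro add_nonneg_nonneg mult_nonneg_nonneg) auto
  have n1: "\<exists>i \<le> length (W g). dist x (\<one>\<^bsub>G\<^esub> \<otimes>\<^bsub>G\<^esub> V g i) \<le> Rn"
  proof -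
    have "geod \<alpha> \<one>\<^bsub>G\<^esub> (\<one>\<^bsub>G\<^esub> \<otimes>\<^bsub>G\<^esub> g)" using ga g by simp
    from near[OF oc g this, of t] obtain i where i: "i \<le> length (W g)" "real (dist x (\<one>\<^bsub>G\<^esub> \<otimes>\<^bsub>G\<^esub> V g i)) \<le> D0"
      using tj g by (auto simp: x_def)
    then have "real (dist x (\<one>\<^bsub>G\<^esub> \<otimes>\<^bsub>G\<^esub> V g i)) \<le> D0 + 4 * \<delta> + 2" using delta_nonneg by linarith
    then show ?thesis using le_Rn i by blast
  qed
  have n2: "\<exists>i \<le> length (W (inv\<^bsub>G\<^esub> g)). dist x (g \<otimes>\<^bsub>G\<^esub> V (inv\<^bsub>G\<^esub> g) i) \<le> Rn"
  proof -
    have "geod (\<lambda>i. \<alpha> (dist \<one>\<^bsub>G\<^esub> g - i)) g \<one>\<^bsub>G\<^esub>" using geod_rev[OF ga oc g] .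
    then have r: "geod (\<lambda>i. \<alpha> (dist \<one>\<^bsub>G\<^esub> g - i)) g (g \<otimes>\<^bsub>G\<^esub> inv\<^bsub>G\<^esub> g)" using g by simp
    have s: "dist \<one>\<^bsub>G\<^esub> g - t \<le> dist g (g \<otimes>\<^bsub>G\<^esub> inv\<^bsub>G\<^esub> g)" using g dist_sym[OF g oc] by simp
    from near[OF g _ r s] obtain i where "i \<le> length (W (inv\<^bsub>G\<^esub> g))"
      "real (dist x (g \<otimes>\<^bsub>G\<^esub> V (inv\<^bsub>G\<^esub> g) i)) \<le> D0"
      using tj g by (auto simp: x_def)
    then have "real (dist x (g \<otimes>\<^bsub>G\<^esub> V (inv\<^bsub>G\<^esub> g) i)) \<le> D0 + 4 * \<delta> + 2" using delta_nonneg by linarith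
    then show ?thesis using le_Rn \<open>i \<le> length (W (inv\<^bsub>G\<^esub> g))\<close> by blast
  qed
  have n3: "\<exists>i \<le> length (W h). dist x (g \<otimes>\<^bsub>G\<^esub> V h i) \<le> Rn"
  proof -
    from near[OF g h gb tj(3)] obtain i where i: "i \<le> length (W h)"
      "real (dist (\<beta> j) (g \<otimes>\<^bsub>G\<^esub> V h i)) \<le> D0" by blast
    have "dist x (g \<otimes>\<^bsub>G\<^esub> V h i) \<le> dist x (\<beta> j) + dist (\<beta> j) (g \<otimes>\<^bsub>G\<^esub> V h i)"
      using dist_tri xc wc g V_carr[OF h] by simp
    then have "real (dist x (g \<otimes>\<^bsub>G\<^esub> V h i)) \<le> D0 + 4 * \<delta> + 2" using i tj(5) unfolding x_def by linarith
    then show ?thesis using le_Rn i by blast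
  qed
  have n4: "\<exists>i \<le> length (W (inv\<^bsub>G\<^esub> h)). dist x ((g \<otimes>\<^bsub>G\<^esub> h) \<otimes>\<^bsub>G\<^esub> V (inv\<^bsub>G\<^esub> h) i) \<le> Rn"
  proof -
    have "geod (\<lambda>i. \<beta> (dist g (g \<otimes>\<^bsub>G\<^esub> h) - i)) (g \<otimes>\<^bsub>G\<^esub> h) g" using geod_rev[OF gb g gh] .
    moreover have "(g \<otimes>\<^bsub>G\<^esub> h) \<otimes>\<^bsub>G\<^esub> inv\<^bsub>G\<^esub> h = g" using g h by (simp add: m_assoc)
    ultimately have r: "geod (\<lambda>i. \<beta> (dist g (g \<otimes>\<^bsub>G\<^esub> h) - i)) (g \<otimes>\<^bsub>G\<^esub> h) ((g \<otimes>\<^bsub>G\<^esub> h) \<otimes>\<^bsub>G\<^esub> inv\<^bsub>G\<^esub> h)" by simp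
    have s: "dist g (g \<otimes>\<^bsub>G\<^esub> h) - j \<le> dist (g \<otimes>\<^bsub>G\<^esub> h) ((g \<otimes>\<^bsub>G\<^esub> h) \<otimes>\<^bsub>G\<^esub> inv\<^bsub>G\<^esub> h)"
      using \<open>(g \<otimes>\<^bsub>G\<^esub> h) \<otimes>\<^bsub>G\<^esub> inv\<^bsub>G\<^esub> h = g\<close> dist_sym[OF g gh] by simp
    from near[OF gh _ r s] obtain i where i: "i \<le> length (W (inv\<^bsub>G\<^esub> h))"
      "real (dist (\<beta> j) ((g \<otimes>\<^bsub>G\<^esub> h) \<otimes>\<^bsub>G\<^esub> V (inv\<^bsub>G\<^esub> h) i)) \<le> D0"
      using tj h by auto
    have "dist x ((g \<otimes>\<^bsub>G\<^esub> h) \<otimes>\<^bsub>G\<^esub> V (inv\<^bsub>G\<^esub> h) i) \<le> dist x (\<beta> j) + dist (\<beta> j) ((g \<otimes>\<^bsub>G\<^esub> h) \<otimes>\<^bsub>G\<^esub> V (inv\<^bsub>G\<^esub> h) i)"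
      using dist_tri xc wc gh V_carr h by simp
    then have "real (dist x ((g \<otimes>\<^bsub>G\<^esub> h) \<otimes>\<^bsub>G\<^esub> V (inv\<^bsub>G\<^esub> h) i)) \<le> D0 + 4 * \<delta> + 2" using i tj(5) unfolding x_def by linarith
    then show ?thesis using le_Rn i by blast
  qed
  have n5: "\<exists>i \<le> length (W (g \<otimes>\<^bsub>G\<^esub> h)). dist x (\<one>\<^bsub>G\<^esub> \<otimes>\<^bsub>G\<^esub> V (g \<otimes>\<^bsub>G\<^esub> h) i) \<le> Rn"
  proof -
    have "geod \<gamma> \<one>\<^bsub>G\<^esub> (\<one>\<^bsub>G\<^esub> \<otimes>\<^bsub>G\<^esub> (g \<otimes>\<^bsub>G\<^esub> h))" using gc gh by simp
    from near[OF oc gh this, of t] obtain i where i: "i \<le> length (W (g \<otimes>\<^bsub>G\<^esub> h))"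
      "real (dist (\<gamma> t) (\<one>\<^bsub>G\<^esub> \<otimes>\<^bsub>G\<^esub> V (g \<otimes>\<^bsub>G\<^esub> h) i)) \<le> D0"
      using tj gh by auto
    have "dist x (\<one>\<^bsub>G\<^esub> \<otimes>\<^bsub>G\<^esub> V (g \<otimes>\<^bsub>G\<^esub> h) i) \<le> dist x (\<gamma> t) + dist (\<gamma> t) (\<one>\<^bsub>G\<^esub> \<otimes>\<^bsub>G\<^esub> V (g \<otimes>\<^bsub>G\<^esub> h) i)"
      using dist_tri xc vc gh V_carr by simp
    then have "real (dist x (\<one>\<^bsub>G\<^esub> \<otimes>\<^bsub>G\<^esub> V (g \<otimes>\<^bsub>G\<^esub> h) i)) \<le> D0 + 4 * \<delta> + 2" using i tj(4) unfolding x_def by linarith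
    then show ?thesis using le_Rn i by blast
  qed
  have n6: "\<exists>i \<le> length (W (inv\<^bsub>G\<^esub> (g \<otimes>\<^bsub>G\<^esub> h))). dist x ((g \<otimes>\<^bsub>G\<^esub> h) \<otimes>\<^bsub>G\<^esub> V (inv\<^bsub>G\<^esub> (g \<otimes>\<^bsub>G\<^esub> h)) i) \<le> Rn"
  proof -
    have "geod (\<lambda>i. \<gamma> (dist \<one>\<^bsub>G\<^esub> (g \<otimes>\<^bsub>G\<^esub> h) - i)) (g \<otimes>\<^bsub>G\<^esub> h) \<one>\<^bsub>G\<^esub>" using geod_rev[OF gc oc gh] .
    then have r: "geod (\<lambda>i. \<gamma> (dist \<one>\<^bsub>G\<^esub> (g \<otimes>\<^bsub>G\<^esub> h) - i)) (g \<otimes>\<^bsub>G\<^esub> h) ((g \<otimes>\<^bsub>G\<^esub> h) \<otimes>\<^bsub>G\<^esub> inv\<^bsub>G\<^esub> (g \<otimes>\<^bsub>G\<^esub> h))" using gh by simp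
    have s: "dist \<one>\<^bsub>G\<^esub> (g \<otimes>\<^bsub>G\<^esub> h) - t \<le> dist (g \<otimes>\<^bsub>G\<^esub> h) ((g \<otimes>\<^bsub>G\<^esub> h) \<otimes>\<^bsub>G\<^esub> inv\<^bsub>G\<^esub> (g \<otimes>\<^bsub>G\<^esub> h))"
      using gh dist_sym[OF gh oc] by simp
    from near[OF gh _ r s] obtain i where i: "i \<le> length (W (inv\<^bsub>G\<^esub> (g \<otimes>\<^bsub>G\<^esub> h)))"
      "real (dist (\<gamma> t) ((g \<otimes>\<^bsub>G\<^esub> h) \<otimes>\<^bsub>G\<^esub> V (inv\<^bsub>G\<^esub> (g \<otimes>\<^bsub>G\<^esub> h)) i)) \<le> D0"
      using tj gh by auto
    have "dist x ((g \<otimes>\<^bsub>G\<^esub> h) \<otimes>\<^bsub>G\<^esub> V (inv\<^bsub>G\<^esub> (g \<otimes>\<^bsub>G\<^esub> h)) i) \<le> dist x (\<gamma> t) + dist (\<gamma> t) ((g \<otimes>\<^bsub>G\<^esub> h) \<otimes>\<^bsub>G\<^esub> V (inv\<^bsub>G\<^esub> (g \<otimes>\<^bsub>G\<^esub> h)) i)"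
      using dist_tri xc vc gh V_carr by simp
    then have "real (dist x ((g \<otimes>\<^bsub>G\<^esub> h) \<otimes>\<^bsub>G\<^esub> V (inv\<^bsub>G\<^esub> (g \<otimes>\<^bsub>G\<^esub> h)) i)) \<le> D0 + 4 * \<delta> + 2" using i tj(4) unfolding x_def by linarith
    then show ?thesis using le_Rn i by blast
  qed
  define s where "s = inv\<^bsub>G\<^esub> x \<otimes>\<^bsub>G\<^esub> g"
  define t' where "t' = inv\<^bsub>G\<^esub> x \<otimes>\<^bsub>G\<^esub> (g \<otimes>\<^bsub>G\<^esub> h)"
  have sc: "s \<in> carrier G" and tc: "t' \<in> carrier G" using xc g h by (auto simp: s_def t'_def)
  have b1: "F x s \<le> E0 * int Rn"
    using n1 term_bound[OF oc g xc] xc by (auto simp: s_def)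
  have b2: "F (inv\<^bsub>G\<^esub> s) (inv\<^bsub>G\<^esub> x) \<le> E0 * int Rn"
  proof -
    obtain i where "i \<le> length (W (inv\<^bsub>G\<^esub> g))" "dist x (g \<otimes>\<^bsub>G\<^esub> V (inv\<^bsub>G\<^esub> g) i) \<le> Rn" using n2 by blast
    from term_bound[OF g _ xc this] show ?thesis using g xc by (simp add: s_def gid1 gid2 m_assoc)
  qed
  have b3: "F (inv\<^bsub>G\<^esub> s) t' \<le> E0 * int Rn"
  proof -
    obtain i where "i \<le> length (W h)" "dist x (g \<otimes>\<^bsub>G\<^esub> V h i) \<le> Rn" using n3 by blast
    from term_bound[OF g h xc this] show ?thesis using g h xc by (simp add: s_def t'_def gid1 gid3 m_assoc)
  qed
  have b4: "F (inv\<^bsub>G\<^esub> t') s \<le> E0 * int Rn"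
  proof -
    obtain i where "i \<le> length (W (inv\<^bsub>G\<^esub> h))" "dist x ((g \<otimes>\<^bsub>G\<^esub> h) \<otimes>\<^bsub>G\<^esub> V (inv\<^bsub>G\<^esub> h) i) \<le> Rn" using n4 by blast
    from term_bound[OF gh _ xc this] show ?thesis using g h xc by (simp add: s_def t'_def gid5 gid4 m_assoc)
  qed
  have b5: "F x t' \<le> E0 * int Rn"
    using n5 term_bound[OF oc gh xc] xc by (auto simp: t'_def)
  have b6: "F (inv\<^bsub>G\<^esub> t') (inv\<^bsub>G\<^esub> x) \<le> E0 * int Rn"
  proof -
    obtain i where "i \<le> length (W (inv\<^bsub>G\<^esub> (g \<otimes>\<^bsub>G\<^esub> h)))" "dist x ((g \<otimes>\<^bsub>G\<^esub> h) \<otimes>\<^bsub>G\<^esub> V (inv\<^bsub>G\<^esub> (g \<otimes>\<^bsub>G\<^esub> h)) i) \<le> Rn" using n6 by blast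
    from term_bound[OF gh _ xc this] show ?thesis using g h xc by (simp add: t'_def gid5 gid2 m_assoc)
  qed
  have p: "F x s \<ge> 0" "F (inv\<^bsub>G\<^esub> s) (inv\<^bsub>G\<^esub> x) \<ge> 0" "F (inv\<^bsub>G\<^esub> s) t' \<ge> 0" "F (inv\<^bsub>G\<^esub> t') s \<ge> 0"
    "F x t' \<ge> 0" "F (inv\<^bsub>G\<^esub> t') (inv\<^bsub>G\<^esub> x) \<ge> 0" using F_pos xc sc tc by auto
  have "x \<otimes>\<^bsub>G\<^esub> s = g" "inv\<^bsub>G\<^esub> s \<otimes>\<^bsub>G\<^esub> t' = h" "x \<otimes>\<^bsub>G\<^esub> t' = g \<otimes>\<^bsub>G\<^esub> h"
    using xc g h by (simp_all add: s_def t'_def gid6 gid7)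
  then have "cc.e g + cc.e h - cc.e (g \<otimes>\<^bsub>G\<^esub> h) - 2 * F g h =
    (F x s - F (inv\<^bsub>G\<^esub> s) (inv\<^bsub>G\<^esub> x)) + (F (inv\<^bsub>G\<^esub> s) t' - F (inv\<^bsub>G\<^esub> t') s) - (F x t' - F (inv\<^bsub>G\<^esub> t') (inv\<^bsub>G\<^esub> x))"
    using cc.defect[OF xc sc tc] by simp
  then show ?thesis using b1 b2 b3 b4 b5 b6 p by linarith
qed


lemma rho_inv_prod: "g \<in> carrier G \<Longrightarrow> \<rho> g \<otimes>\<^bsub>E\<^esub> \<rho> (inv\<^bsub>G\<^esub> g) = \<iota> (- cc.e g)"
proof -
  interpret E: group E by (rule grpE)
  assume g: "g \<in> carrier G"
  have gi: "inv\<^bsub>G\<^esub> g \<in> carrier G" using g by simp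
  define A where "A = \<rho> g \<otimes>\<^bsub>E\<^esub> \<rho> (inv\<^bsub>G\<^esub> g)"
  have Ac: "A \<in> carrier E" using rho_carr g gi by (simp add: A_def)
  have "\<rho> (g \<otimes>\<^bsub>G\<^esub> inv\<^bsub>G\<^esub> g) = A \<otimes>\<^bsub>E\<^esub> \<iota> (cc.e g)"
    unfolding A_def cc.e_def using F_eq[OF g gi] .
  then have A1: "A \<otimes>\<^bsub>E\<^esub> \<iota> (cc.e g) = \<one>\<^bsub>E\<^esub>" using g rho_one by simp
  have "A = A \<otimes>\<^bsub>E\<^esub> (\<iota> (cc.e g) \<otimes>\<^bsub>E\<^esub> \<iota> (- cc.e g))"
    using Ac iota_add[of "cc.e g" "- cc.e g"] by simp
  also have "\<dots> = (A \<otimes>\<^bsub>E\<^esub> \<iota> (cc.e g)) \<otimes>\<^bsub>E\<^esub> \<iota> (- cc.e g)" using Ac by (simp add: E.m_assoc)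
  also have "\<dots> = \<iota> (- cc.e g)" using A1 by simp
  finally show ?thesis unfolding A_def .
qed

lemma qmap_eq: "g \<in> carrier G \<Longrightarrow> qmap G E \<iota> \<rho> g = Phi (\<rho> g) (of_int (cc.e g) / 2)"
  unfolding qmap_def using avg_lemma[OF rho_carr rho_carr rho_inv_prod] by simp

lemma cocy_prod: "g \<in> carrier G \<Longrightarrow> h \<in> carrier G \<Longrightarrow>
   inv\<^bsub>E\<^esub> (\<rho> (g \<otimes>\<^bsub>G\<^esub> h)) \<otimes>\<^bsub>E\<^esub> \<rho> g \<otimes>\<^bsub>E\<^esub> \<rho> h = \<iota> (- F g h)"
proof -
  interpret E: group E by (rule grpE)
  assume g: "g \<in> carrier G" and h: "h \<in> carrier G"
  define B where "B = \<rho> g \<otimes>\<^bsub>E\<^esub> \<rho> h"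
  have Bc: "B \<in> carrier E" using rho_carr g h by (simp add: B_def)
  have "inv\<^bsub>E\<^esub> (\<rho> (g \<otimes>\<^bsub>G\<^esub> h)) \<otimes>\<^bsub>E\<^esub> \<rho> g \<otimes>\<^bsub>E\<^esub> \<rho> h = inv\<^bsub>E\<^esub> (B \<otimes>\<^bsub>E\<^esub> \<iota> (F g h)) \<otimes>\<^bsub>E\<^esub> B"
    using F_eq[OF g h] rho_carr g h by (simp add: B_def E.m_assoc)
  also have "\<dots> = (inv\<^bsub>E\<^esub> (\<iota> (F g h)) \<otimes>\<^bsub>E\<^esub> inv\<^bsub>E\<^esub> B) \<otimes>\<^bsub>E\<^esub> B"
    using Bc by (simp add: E.inv_mult_group)
  also have "\<dots> = inv\<^bsub>E\<^esub> (\<iota> (F g h))" using Bc by (simp add: E.m_assoc)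
  also have "\<dots> = \<iota> (- F g h)" by (simp add: iota_neg)
  finally show ?thesis .
qed

lemma final_mh: "\<exists>M::rat. \<forall>g\<in>carrier G. \<forall>h\<in>carrier G. \<exists>t::rat.
           iotaQ E \<iota> t =
             inv\<^bsub>EQ E \<iota>\<^esub> (qmap G E \<iota> \<rho> (g \<otimes>\<^bsub>G\<^esub> h)) \<otimes>\<^bsub>EQ E \<iota>\<^esub> qmap G E \<iota> \<rho> g
               \<otimes>\<^bsub>EQ E \<iota>\<^esub> qmap G E \<iota> \<rho> h
           \<and> \<bar>t\<bar> \<le> M"
proof (rule exI[of _ "of_int (3 * (E0 * int Rn)) / 2"], intro ballI)
  fix g h assume g: "g \<in> carrier G" and h: "h \<in> carrier G"
  have gh: "g \<otimes>\<^bsub>G\<^esub> h \<in> carrier G" using g h by simp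
  define t where "t = of_int (- F g h) - of_int (cc.e (g \<otimes>\<^bsub>G\<^esub> h)) / 2 + of_int (cc.e g) / 2 + of_int (cc.e h) / (2::rat)"
  have "inv\<^bsub>EQ E \<iota>\<^esub> (qmap G E \<iota> \<rho> (g \<otimes>\<^bsub>G\<^esub> h)) \<otimes>\<^bsub>EQ E \<iota>\<^esub> qmap G E \<iota> \<rho> g \<otimes>\<^bsub>EQ E \<iota>\<^esub> qmap G E \<iota> \<rho> h
     = iotaQ E \<iota> t"
    unfolding qmap_eq[OF g] qmap_eq[OF h] qmap_eq[OF gh] t_def
    by (rule cocycle_lemma[OF rho_carr[OF gh] rho_carr[OF g] rho_carr[OF h] cocy_prod[OF g h]])
  moreover have "\<bar>t\<bar> \<le> of_int (3 * (E0 * int Rn)) / 2"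
  proof -
    have "t = of_int (cc.e g + cc.e h - cc.e (g \<otimes>\<^bsub>G\<^esub> h) - 2 * F g h) / 2"
      unfolding t_def by (simp add: field_simps)
    moreover have "\<bar>of_int (cc.e g + cc.e h - cc.e (g \<otimes>\<^bsub>G\<^esub> h) - 2 * F g h) :: rat\<bar> \<le> of_int (3 * (E0 * int Rn))"
      using main_bound[OF g h] by (metis of_int_abs of_int_le_iff)
    ultimately show ?thesis by simp
  qed
  ultimately show "\<exists>t. iotaQ E \<iota> t =
       inv\<^bsub>EQ E \<iota>\<^esub> (qmap G E \<iota> \<rho> (g \<otimes>\<^bsub>G\<^esub> h)) \<otimes>\<^bsub>EQ E \<iota>\<^esub> qmap G E \<iota> \<rho> g \<otimes>\<^bsub>EQ E \<iota>\<^esub> qmap G E \<iota> \<rho> h \<and>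
       \<bar>t\<bar> \<le> of_int (3 * (E0 * int Rn)) / 2" by metis
qed

end

theorem proposition3p4:
  fixes G :: "('g,'n) monoid_scheme" and E :: "('e,'m) monoid_scheme"
    and \<iota> :: "int \<Rightarrow> 'e" and \<pi> :: "'e \<Rightarrow> 'g"
    and Xa :: "'x set" and ev :: "'x \<Rightarrow> 'e" and C :: int and \<rho> :: "'g \<Rightarrow> 'e"
  assumes hyp: "hyperbolic_group G"
    and ext: "central_extension E G \<iota> \<pi>"
    and finX: "finite Xa"
    and ev: "ev \<in> Xa \<rightarrow> carrier E"
    and sym: "\<forall>x\<in>Xa. inv\<^bsub>E\<^esub> (ev x) \<in> ev ` Xa"
    and gen: "generate E (ev ` Xa) = carrier E"
    and Cpos: "C > 0"
    and rho_max: "\<forall>g\<in>carrier G. is_fibre_max E \<iota> (\<rho> g) (cost_set E \<iota> \<pi> Xa ev C g)"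
    and qgeo: "\<exists>lam::real. lam > 0 \<and>
       (\<forall>g\<in>carrier G. \<forall>w\<in>lists Xa.
          \<pi> (eval_word E ev w) = g \<and>
          eval_word E ev w \<otimes>\<^bsub>E\<^esub> \<iota> (- C * int (length w)) = \<rho> g \<longrightarrow>
          quasigeodesic_word G (\<pi> ` ev ` Xa) (\<pi> \<circ> ev) lam 0 w)"
  shows "\<exists>M::rat. \<forall>g\<in>carrier G. \<forall>h\<in>carrier G. \<exists>t::rat.
           iotaQ E \<iota> t =
             inv\<^bsub>EQ E \<iota>\<^esub> (qmap G E \<iota> \<rho> (g \<otimes>\<^bsub>G\<^esub> h)) \<otimes>\<^bsub>EQ E \<iota>\<^esub> qmap G E \<iota> \<rho> g
               \<otimes>\<^bsub>EQ E \<iota>\<^esub> qmap G E \<iota> \<rho> h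
           \<and> \<bar>t\<bar> \<le> M"
proof -
  obtain S \<delta>0 where S: "finite S" "S \<subseteq> carrier G" "generate G S = carrier G"
    and four0: "\<forall>w\<in>carrier G. \<forall>x\<in>carrier G. \<forall>y\<in>carrier G. \<forall>z\<in>carrier G.
           gromov_product G S w x z \<ge>
             min (gromov_product G S w x y) (gromov_product G S w y z) - \<delta>0"
    and grp: "group G"
    using hyp unfolding hyperbolic_group_def by blast
  obtain lam :: real where lam: "lam > 0" "\<forall>g\<in>carrier G. \<forall>w\<in>lists Xa.
          \<pi> (eval_word E ev w) = g \<and>
          eval_word E ev w \<otimes>\<^bsub>E\<^esub> \<iota> (- C * int (length w)) = \<rho> g \<longrightarrow>
          quasigeodesic_word G (\<pi> ` ev ` Xa) (\<pi> \<circ> ev) lam 0 w" using qgeo by blast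
  interpret mh G E \<iota> \<pi> Xa ev C \<rho> S "max \<delta>0 0" lam
  proof (intro mh.intro mc.intro hypg.intro wgen.intro wgen_axioms.intro hypg_axioms.intro mh_axioms.intro)
    show "group G" by (rule grp)
    show "central_extension E G \<iota> \<pi>" by (rule ext)
    show "ev \<in> Xa \<rightarrow> carrier E" by (rule ev)
    show "\<forall>g\<in>carrier G. is_fibre_max E \<iota> (\<rho> g) (cost_set E \<iota> \<pi> Xa ev C g)" by (rule rho_max)
    show "S \<subseteq> carrier G" "generate G S = carrier G" "finite S" using S by auto
    show "0 \<le> max \<delta>0 0" by simp
    show "\<And>w x y z. w \<in> carrier G \<Longrightarrow> x \<in> carrier G \<Longrightarrow> y \<in> carrier G \<Longrightarrow> z \<in> carrier G \<Longrightarrow>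
        min (gromov_product G S w x y) (gromov_product G S w y z) - max \<delta>0 0 \<le> gromov_product G S w x z"
      using four0 by fastforce
    show "finite Xa" by (rule finX)
    show "0 < lam" by (rule lam(1))
    show "generate E (ev ` Xa) = carrier E" by (rule gen)
    show "\<forall>g\<in>carrier G. \<forall>w\<in>lists Xa.
          \<pi> (eval_word E ev w) = g \<and>
          eval_word E ev w \<otimes>\<^bsub>E\<^esub> \<iota> (- C * int (length w)) = \<rho> g \<longrightarrow>
          quasigeodesic_word G (\<pi> ` ev ` Xa) (\<pi> \<circ> ev) lam 0 w" by (rule lam(2))
  qed
  show ?thesis by (rule final_mh)
qed



end
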